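(* Fix $\beta=(\beta_1,\beta_2)\in\mathbb{R}^2$ with $\beta_1>\beta_2$. Let $P_\sigma:=\{(S_1,S_2)\in\mathbb{R}^2: S_1+S_2\le 1\}$, $I:=1-S_1-S_2$, $\mathcal{P}:=\{(X,I)\in\mathbb{R}^2: I\ge 0\}$, and $\varphi_\beta:P_\sigma\to\mathcal{P}$, $\varphi_\beta(S_1,S_2)=(\beta_1S_1+\beta_2S_2,\;1-S_1-S_2)$. For smooth functions $\Omega_1,\Omega_2:P_\sigma\to\mathbb{R}$ and reals $\gamma_1,\gamma_2$ with $\gamma_1+\gamma_2=1$, let $F_{(\Omega,\gamma)}$ be the vector field on $P_\sigma$ given by $$\dot S_1=-\beta_1S_1I-\Omega_1S_1+\Omega_2S_2+\gamma_1 I,\qquad \dot S_2=-\beta_2S_2I+\Omega_1S_1-\Omega_2S_2+\gamma_2 I .$$ For $f\in C^\infty(\mathcal{P})$ let $V_f:=f\,\partial_X+(X-1)I\,\partial_I$ (i.e. the system $\dot X=f(X,I)$, $\dot I=(X-1)I$). Then: (i) For every such $(\Omega,\gamma)$ one has $(\varphi_\beta)_*F_{(\Omega,\gamma)}=V_f$, where $$f(X,I)=\lambda I+(1-I)P(X,I)+XQ(X,I),\quad \lambda=\beta_1\gamma_1+\beta_2\gamma_2,$$ $$P=(\beta_1\Omega_2+\beta_2\Omega_1+\beta_1\beta_2 I)\circ\varphi_\beta^{-1},\qquad Q=-(\Omega_1+\Omega_2+(\beta_1+\beta_2)I)\circ\varphi_\beta^{-1}.$$ (ii) The assignment $F_{(\Omega,\gamma)}\mapsto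 f$ is a bijection from the set of all vector fields $F_{(\Omega,\gamma)}$ (for this fixed $\beta$, all smooth $\Omega_1,\Omega_2$ and all $\gamma_1+\gamma_2=1$) onto $C^\infty(\mathcal{P})$. (iii) For every $f\in C^\infty(\mathcal{P})$ put $\lambda_f:=f(0,1)$, $Q_f(X,I):=(f(X,I)-f(0,I))/X$, $P_f(I):=(f(0,I)-f(0,1)I)/(1-I)$ (smoothly extended to $X=0$, resp. $I=1$). Then there is exactly one pair $(\Omega,\gamma)$ with $\gamma_1+\gamma_2=1$ such that $(\beta_1\Omega_2+\beta_2\Omega_1+\beta_1\beta_2I)\circ\varphi_\beta^{-1}$ does not depend on $X$ and $(\varphi_\beta)_*F_{(\Omega,\gamma)}=V_f$; it is given by $$\Omega_1=\frac{P_f+\beta_1Q_f+\beta_1^2I}{\beta_2-\beta_1}\circ\varphi_\beta,\quad \Omega_2=\frac{P_f+\beta_2Q_f+\beta_2^2I}{\beta_1-\beta_2}\circ\varphi_\beta,\quad \gamma_1=\frac{\lambda_f-\beta_2}{\beta_1-\beta_2},\ \gamma_2=\frac{\beta_1-\lambda_f}{\beta_1-\beta_2}.$$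
   Context: $(\varphi_\beta)_*F$ denotes the push-forward $D\varphi_\beta\circ F\circ\varphi_\beta^{-1}$ of a vector field $F$. The system $F_{(\Omega,\gamma)}$ is the "SSISS model" (two susceptible compartments $S_1,S_2$, one infectious compartment $I$, recovery rate normalized to $1$), and $X=\beta_1S_1+\beta_2S_2$ is the replacement number; the system $V_f$ is called a replacement number dynamics (RND). *)

theory Defs
  imports "HOL-Analysis.Analysis"
begin

text \<open>C-infinity on an open set: all iterated partial derivatives (indexed by lists of
  basis vectors) exist; D l is the partial derivative along the directions in l.\<close>
definition smooth_open :: "'a::euclidean_space set \<Rightarrow> ('a \<Rightarrow> real) \<Rightarrow> bool" where
  "smooth_open U f \<longleftrightarrow> (\<exists>D :: 'a list \<Rightarrow> 'a \<Rightarrow> real.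
      (\<forall>x\<in>U. D [] x = f x) \<and>
      (\<forall>l. \<forall>x\<in>U. (D l has_derivative (\<lambda>h. \<Sum>b\<in>Basis. (h \<bullet> b) * D (b # l) x)) (at x)))"

definition smooth_on :: "'a::euclidean_space set \<Rightarrow> ('a \<Rightarrow> real) \<Rightarrow> bool" where
  "smooth_on S f \<longleftrightarrow> (\<exists>U g. open U \<and> S \<subseteq> U \<and> smooth_open U g \<and> (\<forall>x\<in>S. g x = f x))"

definition Psig :: "(real \<times> real) set" where
  "Psig = {(S1, S2). S1 + S2 \<le> 1}"

definition Pcal :: "(real \<times> real) set" where
  "Pcal = {(X, I). I \<ge> 0}"

definition Ifun :: "real \<times> real \<Rightarrow> real" where
  "Ifun S = 1 - fst S - snd S"

definition phi :: "real \<Rightarrow> real \<Rightarrow> real \<times> real \<Rightarrow> real \<times> real" where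
  "phi b1 b2 S = (b1 * fst S + b2 * snd S, 1 - fst S - snd S)"

definition phi_inv :: "real \<Rightarrow> real \<Rightarrow> real \<times> real \<Rightarrow> real \<times> real" where
  "phi_inv b1 b2 = inv_into Psig (phi b1 b2)"

definition pushforward ::
  "('a::real_normed_vector \<Rightarrow> 'b::real_normed_vector) \<Rightarrow> ('b \<Rightarrow> 'a) \<Rightarrow> ('a \<Rightarrow> 'a) \<Rightarrow> 'b \<Rightarrow> 'b" where
  "pushforward ph ps F y = frechet_derivative ph (at (ps y)) (F (ps y))"

definition Fvf :: "real \<Rightarrow> real \<Rightarrow> (real \<times> real \<Rightarrow> real) \<Rightarrow> (real \<times> real \<Rightarrow> real)
    \<Rightarrow> real \<Rightarrow> real \<Rightarrow> real \<times> real \<Rightarrow> real \<times> real" where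
  "Fvf b1 b2 Om1 Om2 g1 g2 S =
     (let S1 = fst S; S2 = snd S; I = 1 - S1 - S2 in
      (- b1 * S1 * I - Om1 S * S1 + Om2 S * S2 + g1 * I,
       - b2 * S2 * I + Om1 S * S1 - Om2 S * S2 + g2 * I))"

definition Vf :: "(real \<times> real \<Rightarrow> real) \<Rightarrow> real \<times> real \<Rightarrow> real \<times> real" where
  "Vf f y = (f y, (fst y - 1) * snd y)"

definition admissible :: "(real \<times> real \<Rightarrow> real) \<Rightarrow> (real \<times> real \<Rightarrow> real) \<Rightarrow> real \<Rightarrow> real \<Rightarrow> bool" where
  "admissible Om1 Om2 g1 g2 \<longleftrightarrow> smooth_on Psig Om1 \<and> smooth_on Psig Om2 \<and> g1 + g2 = 1"

definition Pfun :: "real \<Rightarrow> real \<Rightarrow> (real \<times> real \<Rightarrow> real) \<Rightarrow> (real \<times> real \<Rightarrow> real) \<Rightarrow> real \<times> real \<Rightarrow> real" where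
  "Pfun b1 b2 Om1 Om2 = (\<lambda>S. b1 * Om2 S + b2 * Om1 S + b1 * b2 * Ifun S) \<circ> phi_inv b1 b2"

definition Qfun :: "real \<Rightarrow> real \<Rightarrow> (real \<times> real \<Rightarrow> real) \<Rightarrow> (real \<times> real \<Rightarrow> real) \<Rightarrow> real \<times> real \<Rightarrow> real" where
  "Qfun b1 b2 Om1 Om2 = (\<lambda>S. - (Om1 S + Om2 S + (b1 + b2) * Ifun S)) \<circ> phi_inv b1 b2"

definition fmap :: "real \<Rightarrow> real \<Rightarrow> (real \<times> real \<Rightarrow> real) \<Rightarrow> (real \<times> real \<Rightarrow> real)
    \<Rightarrow> real \<Rightarrow> real \<Rightarrow> real \<times> real \<Rightarrow> real" where
  "fmap b1 b2 Om1 Om2 g1 g2 y =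
     (b1 * g1 + b2 * g2) * snd y + (1 - snd y) * Pfun b1 b2 Om1 Om2 y + fst y * Qfun b1 b2 Om1 Om2 y"

end

theory Submission
  imports Defs
begin

definition pds :: "'a set \<Rightarrow> ('a::euclidean_space \<Rightarrow> real) \<Rightarrow> ('a \<Rightarrow> 'a \<Rightarrow> real) \<Rightarrow> bool" where
  "pds U f G \<longleftrightarrow> (\<forall>x\<in>U. (f has_derivative (\<lambda>h. \<Sum>b\<in>Basis. (h \<bullet> b) * G b x)) (at x))"

lemma smooth_dest:
  assumes "open U" "smooth_open U f"
  shows "\<exists>G. (\<forall>b. smooth_open U (G b)) \<and> pds U f G"
proof -
  obtain D where D0: "\<forall>x\<in>U. D [] x = f x"
    and DD: "\<forall>l. \<forall>x\<in>U. (D l has_derivative (\<lambda>h. \<Sum>b\<in>Basis. (h \<bullet> b) * D (b # l) x)) (at x)"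
    using assms(2) unfolding smooth_open_def by blast
  define G where "G b = D [b]" for b
  have "smooth_open U (G b)" for b
    unfolding smooth_open_def
    apply (rule exI[of _ "\<lambda>l. D (l @ [b])"])
    using DD by (auto simp: G_def)
  moreover have "pds U f G"
    unfolding pds_def
  proof
    fix x assume x: "x \<in> U"
    show "(f has_derivative (\<lambda>h. \<Sum>b\<in>Basis. (h \<bullet> b) * G b x)) (at x)"
      using has_derivative_transform_within_open[of "D []", OF _ assms(1) x] DD D0 x
      by (auto simp: G_def)
  qed
  ultimately show ?thesis by blast
qed

primrec Rl :: "(('a \<Rightarrow> real) \<Rightarrow> 'a \<Rightarrow> ('a \<Rightarrow> real)) \<Rightarrow> ('a \<Rightarrow> real) \<Rightarrow> 'a list \<Rightarrow> ('a \<Rightarrow> real)" where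
  "Rl Gp g [] = g"
| "Rl Gp g (b # l) = Rl Gp (Gp g b) l"

lemma Rl_snoc: "Rl Gp g (r @ [b]) = Gp (Rl Gp g r) b"
  by (induct r arbitrary: g) auto

lemma Rl_in: "g \<in> C \<Longrightarrow> (\<And>g b. g \<in> C \<Longrightarrow> Gp g b \<in> C) \<Longrightarrow> Rl Gp g r \<in> C"
  by (induct r arbitrary: g) auto

lemma smooth_coind:
  assumes f: "f \<in> C"
    and step: "\<And>g. g \<in> C \<Longrightarrow> \<exists>G. (\<forall>b\<in>Basis. G b \<in> C) \<and> pds U g G"
  shows "smooth_open U f"
proof -
  define Gs where "Gs g = (SOME G. (\<forall>b\<in>Basis. G b \<in> C) \<and> pds U g G)" for g
  have Gs: "(\<forall>b\<in>Basis. Gs g b \<in> C) \<and> pds U g (Gs g)" if "g \<in> C" for g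
    unfolding Gs_def using someI_ex[OF step[OF that]] .
  define Gp where "Gp g b = (if b \<in> Basis then Gs g b else g)" for g b
  have Gp: "Gp g b \<in> C" if "g \<in> C" for g b
    using Gs[OF that] that by (auto simp: Gp_def)
  define D where "D l = Rl Gp f (rev l)" for l
  show ?thesis
    unfolding smooth_open_def
  proof (intro exI[of _ D] conjI ballI allI)
    fix x assume "x \<in> U" then show "D [] x = f x" by (simp add: D_def)
  next
    fix l x assume x: "x \<in> U"
    have inC: "Rl Gp f (rev l) \<in> C" by (rule Rl_in[OF f Gp])
    have "(D l has_derivative (\<lambda>h. \<Sum>b\<in>Basis. (h \<bullet> b) * Gs (D l) b x)) (at x)"
      using Gs[OF inC] x unfolding pds_def D_def by blast
    moreover have "(\<Sum>b\<in>Basis. (h \<bullet> b) * Gs (D l) b x) = (\<Sum>b\<in>Basis. (h \<bullet> b) * D (b # l) x)" for h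
      by (rule sum.cong) (auto simp: D_def Rl_snoc Gp_def)
    ultimately show "(D l has_derivative (\<lambda>h. \<Sum>b\<in>Basis. (h \<bullet> b) * D (b # l) x)) (at x)"
      by simp
  qed
qed



lemma smooth_open_mono: "V \<subseteq> U \<Longrightarrow> smooth_open U f \<Longrightarrow> smooth_open V f"
  unfolding smooth_open_def by blast

lemma smooth_affine: "smooth_open U (\<lambda>x. x \<bullet> a + (c::real))"
proof (rule smooth_coind[where C="{f. \<exists>a c. f = (\<lambda>x. x \<bullet> a + c)}"])
  fix g assume "g \<in> {f. \<exists>a c. f = (\<lambda>x::'a. x \<bullet> a + (c::real))}"
  then obtain a c where g: "g = (\<lambda>x. x \<bullet> a + c)" by blast
  show "\<exists>G. (\<forall>b\<in>Basis. G b \<in> {f. \<exists>a c. f = (\<lambda>x::'a. x \<bullet> a + (c::real))}) \<and> pds U g G"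
  proof (intro exI[of _ "\<lambda>b x. b \<bullet> a"] conjI ballI)
    fix b :: 'a
    have "(\<lambda>x::'a. b \<bullet> a) = (\<lambda>x. x \<bullet> 0 + b \<bullet> a)" by simp
    then show "(\<lambda>x. b \<bullet> a) \<in> {f. \<exists>a c. f = (\<lambda>x::'a. x \<bullet> a + (c::real))}" by blast
  next
    have e: "(\<lambda>h. h \<bullet> a + 0) = (\<lambda>h. \<Sum>b\<in>Basis. h \<bullet> b * (b \<bullet> a))"
      by (rule ext) (subst euclidean_inner, simp add: inner_commute[of a])
    show "pds U g (\<lambda>b x. b \<bullet> a)"
      unfolding pds_def g
    proof
      fix x
      show "((\<lambda>x. x \<bullet> a + c) has_derivative (\<lambda>h. \<Sum>b\<in>Basis. h \<bullet> b * (b \<bullet> a))) (at x)"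
        unfolding e[symmetric]
        by (rule has_derivative_add[OF bounded_linear_imp_has_derivative[OF bounded_linear_inner_left] has_derivative_const])
    qed
  qed
qed blast

lemma smooth_const: "smooth_open U (\<lambda>x. c::real)"
  using smooth_affine[of U 0 c] by simp

lemma smooth_inner: "smooth_open U (\<lambda>x. x \<bullet> a)"
  using smooth_affine[of U a 0] by simp

inductive_set Alg for U :: "'a::euclidean_space set" where
  base: "smooth_open U f \<Longrightarrow> f \<in> Alg U"
| add: "f \<in> Alg U \<Longrightarrow> g \<in> Alg U \<Longrightarrow> (\<lambda>x. f x + g x) \<in> Alg U"
| mul: "f \<in> Alg U \<Longrightarrow> g \<in> Alg U \<Longrightarrow> (\<lambda>x. f x * g x) \<in> Alg U"

lemma Alg_step:
  assumes "open U" "g \<in> Alg U"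
  shows "\<exists>G. (\<forall>b\<in>Basis. G b \<in> Alg U) \<and> pds U g G"
  using assms(2)
proof induct
  case (base f)
  then show ?case using smooth_dest[OF assms(1) base] by (auto intro: Alg.base)
next
  case (add f g)
  then obtain F G where F: "\<forall>b\<in>Basis. F b \<in> Alg U" "pds U f F"
    and G: "\<forall>b\<in>Basis. G b \<in> Alg U" "pds U g G" by blast
  show ?case
  proof (intro exI[of _ "\<lambda>b x. F b x + G b x"] conjI)
    show "\<forall>b\<in>Basis. (\<lambda>x. F b x + G b x) \<in> Alg U" using F G by (auto intro: Alg.add)
    show "pds U (\<lambda>x. f x + g x) (\<lambda>b x. F b x + G b x)"
      unfolding pds_def
    proof
      fix x assume x: "x \<in> U"
      show "((\<lambda>x. f x + g x) has_derivative (\<lambda>h. \<Sum>b\<in>Basis. h \<bullet> b * (F b x + G b x))) (at x)"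
        using has_derivative_add[OF F(2)[unfolded pds_def, rule_format, OF x] G(2)[unfolded pds_def, rule_format, OF x]]
        by (simp add: distrib_left sum.distrib)
    qed
  qed
next
  case (mul f g)
  then obtain F G where F: "\<forall>b\<in>Basis. F b \<in> Alg U" "pds U f F"
    and G: "\<forall>b\<in>Basis. G b \<in> Alg U" "pds U g G" by blast
  show ?case
  proof (intro exI[of _ "\<lambda>b x. F b x * g x + f x * G b x"] conjI)
    show "\<forall>b\<in>Basis. (\<lambda>x. F b x * g x + f x * G b x) \<in> Alg U"
      using F G mul by (auto intro!: Alg.add Alg.mul)
    show "pds U (\<lambda>x. f x * g x) (\<lambda>b x. F b x * g x + f x * G b x)"
      unfolding pds_def
    proof
      fix x assume x: "x \<in> U"
      have e: "(\<lambda>h. f x * (\<Sum>b\<in>Basis. h \<bullet> b * G b x) + (\<Sum>b\<in>Basis. h \<bullet> b * F b x) * g x)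
           = (\<lambda>h. \<Sum>b\<in>Basis. h \<bullet> b * (F b x * g x + f x * G b x))"
        by (rule ext) (simp add: sum.distrib sum_distrib_left distrib_left algebra_simps)
      show "((\<lambda>x. f x * g x) has_derivative (\<lambda>h. \<Sum>b\<in>Basis. h \<bullet> b * (F b x * g x + f x * G b x))) (at x)"
        using has_derivative_mult[OF F(2)[unfolded pds_def, rule_format, OF x] G(2)[unfolded pds_def, rule_format, OF x]]
        unfolding e .
    qed
  qed
qed

lemma Alg_smooth: "open U \<Longrightarrow> f \<in> Alg U \<Longrightarrow> smooth_open U f"
  by (rule smooth_coind[where C="Alg U"]) (auto intro: Alg_step)

lemma smooth_add: "open U \<Longrightarrow> smooth_open U f \<Longrightarrow> smooth_open U g \<Longrightarrow> smooth_open U (\<lambda>x. f x + g x)"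
  by (rule Alg_smooth) (auto intro: Alg.intros)

lemma smooth_mult: "open U \<Longrightarrow> smooth_open U f \<Longrightarrow> smooth_open U g \<Longrightarrow> smooth_open U (\<lambda>x. f x * g x)"
  by (rule Alg_smooth) (auto intro: Alg.intros)

lemma smooth_sum: fixes f :: "'i \<Rightarrow> 'a::euclidean_space \<Rightarrow> real"
  assumes "open U" "finite S" "\<And>i. i \<in> S \<Longrightarrow> smooth_open U (f i)"
  shows "smooth_open U (\<lambda>x. \<Sum>i\<in>S. f i x)"
  using assms(2,3) by (induct S rule: finite_induct) (auto intro!: smooth_add smooth_const assms(1))

lemma smooth_comp:
  fixes k :: "'b::euclidean_space \<Rightarrow> real" and M :: "'a::euclidean_space \<Rightarrow> 'b"
  assumes V: "open V" and k: "smooth_open V k" and M: "\<And>x. (M has_derivative A) (at x)"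
    and UV: "\<And>x. x \<in> U \<Longrightarrow> M x \<in> V"
  shows "smooth_open U (\<lambda>x. k (M x))"
proof (rule smooth_coind[where C="{\<lambda>x. k' (M x) | k'. smooth_open V k'}"])
  have lA: "linear A" using M has_derivative_linear by blast
  fix g assume "g \<in> {\<lambda>x. k' (M x) | k'. smooth_open V k'}"
  then obtain k' where g: "g = (\<lambda>x. k' (M x))" and k': "smooth_open V k'" by auto
  obtain G where G: "\<forall>b. smooth_open V (G b)" "pds V k' G" using smooth_dest[OF V k'] by blast
  define H where "H b y = (\<Sum>b'\<in>Basis. (A b \<bullet> b') * G b' y)" for b y
  show "\<exists>G. (\<forall>b\<in>Basis. G b \<in> {\<lambda>x. k' (M x) | k'. smooth_open V k'}) \<and> pds U g G"
  proof (intro exI[of _ "\<lambda>b x. H b (M x)"] conjI ballI)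
    fix b :: 'a
    have "smooth_open V (H b)" unfolding H_def
    proof (rule smooth_sum[OF V])
      fix i show "smooth_open V (\<lambda>y. A b \<bullet> i * G i y)"
        by (rule smooth_mult[OF V smooth_const G(1)[rule_format]])
    qed simp
    then show "(\<lambda>x. H b (M x)) \<in> {\<lambda>x. k' (M x) | k'. smooth_open V k'}" by blast
  next
    show "pds U g (\<lambda>b x. H b (M x))"
      unfolding pds_def
    proof
      fix x assume x: "x \<in> U"
      have d: "(g has_derivative (\<lambda>h. \<Sum>b'\<in>Basis. (A h \<bullet> b') * G b' (M x))) (at x)"
      proof -
        have "(k' has_derivative (\<lambda>w. \<Sum>b'\<in>Basis. (w \<bullet> b') * G b' (M x))) (at (M x))"
          using G(2) UV[OF x] unfolding pds_def by blast
        from has_derivative_compose[OF M this] show ?thesis unfolding g .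
      qed
      have eq: "(\<Sum>b'\<in>Basis. (A h \<bullet> b') * G b' (M x)) = (\<Sum>b\<in>Basis. (h \<bullet> b) * H b (M x))" for h
      proof -
        have "A h = A (\<Sum>b\<in>Basis. (h \<bullet> b) *\<^sub>R b)" by (simp add: euclidean_representation)
        also have "\<dots> = (\<Sum>b\<in>Basis. (h \<bullet> b) *\<^sub>R A b)"
          by (simp add: linear_sum[OF lA] linear_scale[OF lA])
        finally have Ah: "A h \<bullet> b' = (\<Sum>b\<in>Basis. (h \<bullet> b) * (A b \<bullet> b'))" for b'
          by (simp add: inner_sum_left)
        show ?thesis
          unfolding Ah H_def sum_distrib_left sum_distrib_right
          by (subst sum.swap) (simp add: mult.assoc)
      qed
      show "(g has_derivative (\<lambda>h. \<Sum>b\<in>Basis. (h \<bullet> b) * H b (M x))) (at x)"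
        using d by (simp only: eq)
    qed
  qed
qed (use k in auto)



lemma smooth_cont:
  assumes "open U" "smooth_open U f" shows "continuous_on U f"
proof -
  obtain G where "pds U f G" using smooth_dest[OF assms] by blast
  then have "\<forall>x\<in>U. isCont f x" unfolding pds_def using has_derivative_continuous by blast
  then show ?thesis by (simp add: continuous_at_imp_continuous_on)
qed

lemma sum_Basis_RR: "(\<Sum>b\<in>(Basis::(real\<times>real) set). f b) = f (1,0) + f (0,1)"
  by (simp add: Basis_prod_def add.commute)

lemma inner_10: "v \<bullet> (1::real, 0::real) = fst v" and inner_01: "v \<bullet> (0::real, 1::real) = snd v"
  by (cases v; simp)+

definition hint :: "nat \<Rightarrow> (real \<times> real \<Rightarrow> real) \<Rightarrow> real \<times> real \<Rightarrow> real" where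
  "hint k h p = integral {0..1} (\<lambda>t. t ^ k * h (t * fst p, snd p))"

lemma tube_open:
  fixes W :: "(real \<times> real) set"
  assumes W: "open W"
  shows "open {p. \<forall>t\<in>{0..1::real}. (t * fst p, snd p) \<in> W}"
  unfolding open_subopen[of "{p. \<forall>t\<in>{0..1::real}. (t * fst p, snd p) \<in> W}"]
proof
  fix p assume p: "p \<in> {p. \<forall>t\<in>{0..1::real}. (t * fst p, snd p) \<in> W}"
  define F where "F = (\<lambda>z::(real\<times>real)\<times>real. (snd z * fst (fst z), snd (fst z)))"
  have cF: "continuous (at z) F" for z unfolding F_def by (intro continuous_intros)
  have oW': "open (F -` W)" by (rule continuous_open_vimage[OF W cF])
  have "{p} \<times> {0..1} \<subseteq> F -` W"
  proof
    fix z assume "z \<in> {p} \<times> {0..1::real}"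
    then obtain t where z: "z = (p, t)" "t \<in> {0..1}" by blast
    then have "F z = (t * fst p, snd p)" by (simp add: F_def)
    have "(t * fst p, snd p) \<in> W" using p z(2) by (simp only: mem_Collect_eq)
    then show "z \<in> F -` W" using \<open>F z = _\<close> by (simp only: vimage_eq)
  qed
  from Elementary_Topology.tube_lemma[OF compact_Icc oW' this]
  obtain X0 where X0: "p \<in> X0" "open X0" "X0 \<times> {0..1} \<subseteq> F -` W"
    by (elim exE conjE) (rule that)
  have "X0 \<subseteq> {p. \<forall>t\<in>{0..1::real}. (t * fst p, snd p) \<in> W}"
  proof
    fix q assume q: "q \<in> X0"
    show "q \<in> {p. \<forall>t\<in>{0..1::real}. (t * fst p, snd p) \<in> W}"
      unfolding mem_Collect_eq
    proof (intro ballI)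
      fix t :: real assume "t \<in> {0..1}"
      then have "(q, t) \<in> F -` W" using X0(3) q by blast
      then show "(t * fst q, snd q) \<in> W" by (simp add: F_def)
    qed
  qed
  then show "\<exists>T. open T \<and> p \<in> T \<and> T \<subseteq> {p. \<forall>t\<in>{0..1::real}. (t * fst p, snd p) \<in> W}"
    using X0 by blast
qed



lemma hint_deriv:
  fixes h :: "real \<times> real \<Rightarrow> real" and W U :: "(real \<times> real) set"
  assumes W: "open W" and hW: "continuous_on W h" and G: "pds W h G"
    and cG1: "continuous_on W (G (1,0))" and cG2: "continuous_on W (G (0,1))"
    and U: "open U" and UW: "\<And>p t. p \<in> U \<Longrightarrow> t \<in> {0..1} \<Longrightarrow> (t * fst p, snd p) \<in> W"
    and x0: "x0 \<in> U"
  shows "(hint k h has_derivative (\<lambda>v. fst v * hint (Suc k) (G (1,0)) x0 + snd v * hint k (G (0,1)) x0)) (at x0)"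
proof -
  obtain r where r: "r > 0" "ball x0 r \<subseteq> U" using U x0 open_contains_ball by blast
  define H1 where "H1 = G (1,0)"
  define H2 where "H2 = G (0,1)"
  define a where "a x t = t ^ Suc k * H1 (t * fst x, snd x)" for x :: "real \<times> real" and t :: real
  define b where "b x t = t ^ k * H2 (t * fst x, snd x)" for x :: "real \<times> real" and t :: real
  define fx where "fx x t = a x t *\<^sub>R Blinfun (fst :: real\<times>real \<Rightarrow> real) + b x t *\<^sub>R Blinfun snd" for x t
  have bl: "blinfun_apply (fx x t) v = a x t * fst v + b x t * snd v" for x t v
    by (simp add: fx_def blinfun.add_left blinfun.scaleR_left bounded_linear_Blinfun_apply bounded_linear_fst bounded_linear_snd)
  have img: "(\<lambda>z. (snd z * fst (fst z), snd (fst z))) ` (U \<times> {0..1}) \<subseteq> W"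
    using UW by auto
  have cmap: "continuous_on (U \<times> {0..1::real}) (\<lambda>z. (snd z * fst (fst z), snd (fst z)))"
    by (intro continuous_intros)
  have c1: "continuous_on (U \<times> {0..1}) (\<lambda>z. H1 (snd z * fst (fst z), snd (fst z)))"
    using continuous_on_compose2[OF cG1[folded H1_def] cmap img] .
  have c2: "continuous_on (U \<times> {0..1}) (\<lambda>z. H2 (snd z * fst (fst z), snd (fst z)))"
    using continuous_on_compose2[OF cG2[folded H2_def] cmap img] .
  have c3: "continuous_on (U \<times> {0..1}) (\<lambda>z. h (snd z * fst (fst z), snd (fst z)))"
    using continuous_on_compose2[OF hW cmap img] .
  have cp: "continuous_on (U \<times> {0..1::real}) (\<lambda>z. snd z ^ n)" for n
    by (intro continuous_on_power continuous_on_snd continuous_on_id)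
  have ca: "continuous_on (U \<times> {0..1}) (\<lambda>z. a (fst z) (snd z))"
    unfolding a_def by (rule continuous_on_mult[OF cp c1])
  have cb: "continuous_on (U \<times> {0..1}) (\<lambda>z. b (fst z) (snd z))"
    unfolding b_def by (rule continuous_on_mult[OF cp c2])
  have ch: "continuous_on (U \<times> {0..1}) (\<lambda>z. snd z ^ k * h (snd z * fst (fst z), snd (fst z)))"
    by (rule continuous_on_mult[OF cp c3])
  have cslice: "continuous_on {0..1} (\<lambda>t. F (x, t))" if "continuous_on (U \<times> {0..1::real}) F" "x \<in> U" for F :: "(real \<times> real) \<times> real \<Rightarrow> real" and x
  proof -
    have c: "continuous_on {0..1::real} (\<lambda>t. (x, t))" by (intro continuous_on_Pair continuous_on_const continuous_on_id)
    have i: "(\<lambda>t. (x, t)) ` {0..1} \<subseteq> U \<times> {0..1}" using that(2) by (intro image_subsetI) simp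
    show ?thesis by (rule continuous_on_compose2[OF that(1) c i])
  qed
  have cfx: "continuous_on (ball x0 r \<times> cbox 0 1) (\<lambda>(x, t). fx x t)"
  proof -
    have "continuous_on (U \<times> {0..1}) (\<lambda>z. fx (fst z) (snd z))"
      unfolding fx_def by (intro continuous_intros ca cb)
    then show ?thesis using r(2) by (auto simp: split_beta intro: continuous_on_subset)
  qed
  have ffx: "((\<lambda>x. t ^ k * h (t * fst x, snd x)) has_derivative blinfun_apply (fx x t)) (at x within ball x0 r)"
    if x: "x \<in> ball x0 r" and t: "t \<in> cbox 0 1" for x t
  proof -
    have xU: "x \<in> U" using x r by blast
    have inW: "(t * fst x, snd x) \<in> W" using UW[OF xU] t by simp
    have dh: "(h has_derivative (\<lambda>w. \<Sum>b\<in>Basis. (w \<bullet> b) * G b (t * fst x, snd x))) (at (t * fst x, snd x))"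
      using G inW unfolding pds_def by blast
    have dm: "((\<lambda>x::real\<times>real. (t * fst x, snd x)) has_derivative (\<lambda>v. (t * fst v, snd v))) (at x within ball x0 r)"
      by (intro has_derivative_Pair has_derivative_mult_right has_derivative_fst has_derivative_snd has_derivative_ident)
    have dc: "((\<lambda>x. h (t * fst x, snd x)) has_derivative (\<lambda>v. \<Sum>b\<in>Basis. ((t * fst v, snd v) \<bullet> b) * G b (t * fst x, snd x))) (at x within ball x0 r)"
      using has_derivative_compose[OF dm dh] by simp
    have dk: "((\<lambda>x. t ^ k * h (t * fst x, snd x)) has_derivative (\<lambda>v. t ^ k * (\<Sum>b\<in>Basis. ((t * fst v, snd v) \<bullet> b) * G b (t * fst x, snd x)))) (at x within ball x0 r)"
      by (rule has_derivative_mult_right[OF dc])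
    have e: "(\<lambda>v. t ^ k * (\<Sum>b\<in>Basis. ((t * fst v, snd v) \<bullet> b) * G b (t * fst x, snd x))) = blinfun_apply (fx x t)"
    proof
      fix v :: "real \<times> real"
      show "t ^ k * (\<Sum>b\<in>Basis. ((t * fst v, snd v) \<bullet> b) * G b (t * fst x, snd x)) = blinfun_apply (fx x t) v"
        unfolding bl sum_Basis_RR inner_10 inner_01 a_def b_def H1_def H2_def
        by (simp add: algebra_simps)
    qed
    show ?thesis using dk unfolding e .
  qed
  have int: "(\<lambda>t. t ^ k * h (t * fst x, snd x)) integrable_on cbox 0 1" if "x \<in> ball x0 r" for x
  proof -
    have "x \<in> U" using that r by blast
    from cslice[OF ch this] show ?thesis by (simp add: integrable_continuous_interval)
  qed
  have x0b: "x0 \<in> ball x0 r" using r by simp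
  have L: "((\<lambda>x. integral (cbox 0 1) (\<lambda>t. t ^ k * h (t * fst x, snd x))) has_derivative
      blinfun_apply (integral (cbox 0 1) (fx x0))) (at x0 within ball x0 r)"
    by (rule leibniz_rule[OF ffx int cfx x0b convex_ball])
  have L': "(hint k h has_derivative blinfun_apply (integral (cbox 0 1) (fx x0))) (at x0)"
    using L unfolding at_within_open[OF x0b open_ball] by (simp add: hint_def[abs_def])
  have x0U: "x0 \<in> U" by (rule x0)
  have ca0: "continuous_on {0..1} (a x0)" using cslice[OF ca x0U] by simp
  have cb0: "continuous_on {0..1} (b x0)" using cslice[OF cb x0U] by simp
  have ia: "(\<lambda>t. a x0 t) integrable_on {0..1}" using ca0 by (simp add: integrable_continuous_interval)
  have ib: "(\<lambda>t. b x0 t) integrable_on {0..1}" using cb0 by (simp add: integrable_continuous_interval)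
  have ifx: "fx x0 integrable_on cbox 0 1"
  proof -
    have "continuous_on {0..1} (\<lambda>t. fx x0 t)"
      unfolding fx_def by (intro continuous_intros ca0 cb0)
    then show ?thesis by (simp add: integrable_continuous_interval)
  qed
  have e: "blinfun_apply (integral (cbox 0 1) (fx x0)) = (\<lambda>v. fst v * hint (Suc k) (G (1,0)) x0 + snd v * hint k (G (0,1)) x0)"
  proof
    fix v
    have "blinfun_apply (integral (cbox 0 1) (fx x0)) v = integral {0..1} (\<lambda>t. a x0 t * fst v + b x0 t * snd v)"
      using blinfun_apply_integral[OF ifx] bl by simp
    also have "\<dots> = integral {0..1} (\<lambda>t. a x0 t) * fst v + integral {0..1} (\<lambda>t. b x0 t) * snd v"
      using ia ib by (simp add: integral_add integrable_on_mult_left)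
    also have "\<dots> = fst v * hint (Suc k) (G (1,0)) x0 + snd v * hint k (G (0,1)) x0"
      by (simp add: hint_def a_def b_def H1_def H2_def)
    finally show "blinfun_apply (integral (cbox 0 1) (fx x0)) v = fst v * hint (Suc k) (G (1,0)) x0 + snd v * hint k (G (0,1)) x0" .
  qed
  show ?thesis using L' unfolding e .
qed



lemma hint_smooth:
  fixes W U :: "(real \<times> real) set" and h :: "real \<times> real \<Rightarrow> real"
  assumes W: "open W" and h: "smooth_open W h" and U: "open U"
    and UW: "\<And>p t. p \<in> U \<Longrightarrow> t \<in> {0..1} \<Longrightarrow> (t * fst p, snd p) \<in> W"
  shows "smooth_open U (hint k h)"
proof (rule smooth_coind[where C="{hint k h | k h. smooth_open W h}"])
  show "hint k h \<in> {hint k h | k h. smooth_open W h}" using h by blast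
next
  fix g assume "g \<in> {hint k h | k h. smooth_open W h}"
  then obtain k' h' where g: "g = hint k' h'" and h': "smooth_open W h'" by blast
  obtain G where G: "\<forall>b. smooth_open W (G b)" "pds W h' G" using smooth_dest[OF W h'] by blast
  define Gn where "Gn b = (if b = (1::real, 0::real) then hint (Suc k') (G (1,0)) else hint k' (G (0,1)))" for b
  show "\<exists>G. (\<forall>b\<in>Basis. G b \<in> {hint k h | k h. smooth_open W h}) \<and> pds U g G"
  proof (intro exI[of _ Gn] conjI ballI)
    fix b :: "real \<times> real"
    show "Gn b \<in> {hint k h | k h. smooth_open W h}"
      using G(1) unfolding Gn_def by auto
  next
    show "pds U g Gn"
      unfolding pds_def
    proof
      fix x assume x: "x \<in> U"
      have d: "(hint k' h' has_derivative (\<lambda>v. fst v * hint (Suc k') (G (1,0)) x + snd v * hint k' (G (0,1)) x)) (at x)"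
        by (rule hint_deriv[OF W smooth_cont[OF W h'] G(2) smooth_cont[OF W G(1)[rule_format]]
              smooth_cont[OF W G(1)[rule_format]] U UW x])
      have e: "(\<lambda>v. fst v * hint (Suc k') (G (1,0)) x + snd v * hint k' (G (0,1)) x) = (\<lambda>v. \<Sum>b\<in>Basis. v \<bullet> b * Gn b x)"
        unfolding sum_Basis_RR inner_10 inner_01 Gn_def by simp
      show "(g has_derivative (\<lambda>v. \<Sum>b\<in>Basis. v \<bullet> b * Gn b x)) (at x)"
        using d unfolding g e .
    qed
  qed
qed

lemma hint_eq:
  fixes g :: "real \<times> real \<Rightarrow> real" and W :: "(real \<times> real) set"
  assumes G: "pds W g G" and X: "X \<noteq> 0" and seg: "\<And>t. t \<in> {0..1::real} \<Longrightarrow> (t * X, I) \<in> W"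
  shows "hint 0 (G (1,0)) (X, I) = (g (X, I) - g (0, I)) / X"
proof -
  have vd: "((\<lambda>t. g (t * X, I)) has_vector_derivative (X * G (1,0) (t * X, I))) (at t within {0..1})"
    if t: "t \<in> {0..1}" for t
  proof -
    have dm: "((\<lambda>t. (t * X, I)) has_derivative (\<lambda>s. (s * X, 0))) (at t within {0..1})"
      by (intro has_derivative_Pair has_derivative_mult_left has_derivative_const has_derivative_ident)
    have dh: "(g has_derivative (\<lambda>w. \<Sum>b\<in>Basis. (w \<bullet> b) * G b (t * X, I))) (at (t * X, I))"
      using G seg[OF t] unfolding pds_def by blast
    have e: "(\<lambda>s. \<Sum>b\<in>Basis. ((s * X, 0::real) \<bullet> b) * G b (t * X, I)) = (\<lambda>s. s *\<^sub>R (X * G (1,0) (t * X, I)))"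
      unfolding sum_Basis_RR inner_10 inner_01 by (simp add: algebra_simps)
    show ?thesis
      unfolding has_vector_derivative_def using has_derivative_compose[OF dm dh] unfolding e .
  qed
  have HI: "((\<lambda>t. X * G (1,0) (t * X, I)) has_integral (g (1 * X, I) - g (0 * X, I))) {0..1}"
    by (rule fundamental_theorem_of_calculus[OF zero_le_one vd])
  have "integral {0..1} (\<lambda>t. X * G (1,0) (t * X, I)) = g (X, I) - g (0, I)"
    using integral_unique[OF HI] by (simp only: mult_1 mult_zero_left)
  then have "X * integral {0..1} (\<lambda>t. G (1,0) (t * X, I)) = g (X, I) - g (0, I)"
    by simp
  then show ?thesis using X unfolding hint_def by (simp add: field_simps)
qed



lemma smooth_cmul: "open U \<Longrightarrow> smooth_open U f \<Longrightarrow> smooth_open U (\<lambda>x. c * f x)"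
  by (rule smooth_mult[OF _ smooth_const])

lemma smooth_diff: "open U \<Longrightarrow> smooth_open U f \<Longrightarrow> smooth_open U g \<Longrightarrow> smooth_open U (\<lambda>x. f x - g x)"
  using smooth_add[of U f "\<lambda>x. (-1) * g x"] smooth_cmul[of U g "-1"] by simp

lemma smooth_uminus: "open U \<Longrightarrow> smooth_open U f \<Longrightarrow> smooth_open U (\<lambda>x. - f x)"
  using smooth_cmul[of U f "-1"] by simp

lemma smooth_divc: "open U \<Longrightarrow> smooth_open U f \<Longrightarrow> smooth_open U (\<lambda>x. f x / c)"
  using smooth_mult[OF _ _ smooth_const, of U f "1/c"] by simp

lemma smooth_fst: "smooth_open U (fst :: real \<times> real \<Rightarrow> real)"
  using smooth_inner[of U "(1::real, 0::real)"] by (simp add: inner_10 fun_eq_iff)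

lemma smooth_snd: "smooth_open U (snd :: real \<times> real \<Rightarrow> real)"
  using smooth_inner[of U "(0::real, 1::real)"] by (simp add: inner_01 fun_eq_iff)

lemma smooth_fst': "smooth_open U (\<lambda>x::real \<times> real. fst x)"
  using smooth_fst by (simp add: fun_eq_iff)

lemma smooth_snd': "smooth_open U (\<lambda>x::real \<times> real. snd x)"
  using smooth_snd by (simp add: fun_eq_iff)

lemma smooth_Ifun: "smooth_open U (\<lambda>x. Ifun x)"
proof -
  have "(\<lambda>x::real\<times>real. x \<bullet> (-1, -1) + 1) = (\<lambda>x. Ifun x)"
    by (rule ext, case_tac x) (simp add: Ifun_def)
  then show ?thesis using smooth_affine[of U "(-1::real, -1::real)" 1] by simp
qed

lemma smooth_on_cont:
  assumes "smooth_on S f"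
  shows "\<exists>U k. open U \<and> S \<subseteq> U \<and> continuous_on U k \<and> (\<forall>x\<in>S. k x = f x)"
  using assms smooth_cont unfolding smooth_on_def by blast

lemma cont_eq_at:
  fixes f1 f2 :: "real \<Rightarrow> real"
  assumes "isCont f1 a" "isCont f2 a" "d > 0" "\<And>x. x \<noteq> a \<Longrightarrow> \<bar>x - a\<bar> < d \<Longrightarrow> f1 x = f2 x"
  shows "f1 a = f2 a"
proof -
  have ev: "eventually (\<lambda>x. f1 x = f2 x) (at a)"
    unfolding eventually_at using assms(3,4) by (auto simp: dist_real_def)
  have t1: "(f1 \<longlongrightarrow> f1 a) (at a)" using assms(1) by (simp add: isCont_def)
  have t2: "(f1 \<longlongrightarrow> f2 a) (at a)"
    using assms(2) unfolding isCont_def by (rule Lim_transform_eventually) (use ev in \<open>simp add: eq_commute\<close>)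
  show ?thesis using tendsto_unique[OF at_neq_bot t1 t2] .
qed

definition Linv :: "real \<Rightarrow> real \<Rightarrow> real \<times> real \<Rightarrow> real \<times> real" where
  "Linv b1 b2 y = ((fst y - b2 + b2 * snd y) / (b1 - b2), (b1 - b1 * snd y - fst y) / (b1 - b2))"

lemma frac_helper: "d \<noteq> 0 \<Longrightarrow> N = X * d \<Longrightarrow> N / d = (X::real)"
  by simp

lemma lin2: "(p::real) * (A / d) + q * (B / d) = (p * A + q * B) / d"
  by (simp add: add_divide_distrib)

lemma lin3: "d \<noteq> 0 \<Longrightarrow> 1 - A / d - B / d = (d - A - B) / (d::real)"
  by (simp add: diff_divide_distrib)

lemma phi_Linv: assumes "b1 \<noteq> b2" shows "phi b1 b2 (Linv b1 b2 y) = y"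
proof -
  obtain X I where y: "y = (X, I)" by (cases y)
  have d: "b1 - b2 \<noteq> 0" using assms by simp
  have "b1 * ((X - b2 + b2 * I) / (b1 - b2)) + b2 * ((b1 - b1 * I - X) / (b1 - b2))
      = (b1 * (X - b2 + b2 * I) + b2 * (b1 - b1 * I - X)) / (b1 - b2)"
    by (rule lin2)
  also have "\<dots> = X" by (rule frac_helper[OF d]) (simp add: algebra_simps)
  finally have 1: "b1 * ((X - b2 + b2 * I) / (b1 - b2)) + b2 * ((b1 - b1 * I - X) / (b1 - b2)) = X" .
  have "1 - (X - b2 + b2 * I) / (b1 - b2) - (b1 - b1 * I - X) / (b1 - b2)
      = ((b1 - b2) - (X - b2 + b2 * I) - (b1 - b1 * I - X)) / (b1 - b2)"
    using d by (rule lin3)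
  also have "\<dots> = I" by (rule frac_helper[OF d]) (simp add: algebra_simps)
  finally have 2: "1 - (X - b2 + b2 * I) / (b1 - b2) - (b1 - b1 * I - X) / (b1 - b2) = I" .
  show ?thesis using 1 2 by (simp add: y phi_def Linv_def)
qed

lemma Linv_phi: assumes "b1 \<noteq> b2" shows "Linv b1 b2 (phi b1 b2 S) = S"
proof -
  obtain S1 S2 where y: "S = (S1, S2)" by (cases S)
  have d: "b1 - b2 \<noteq> 0" using assms by simp
  have 1: "(b1 * S1 + b2 * S2 - b2 + b2 * (1 - S1 - S2)) / (b1 - b2) = S1"
    by (rule frac_helper[OF d]) (simp add: algebra_simps)
  have 2: "(b1 - b1 * (1 - S1 - S2) - (b1 * S1 + b2 * S2)) / (b1 - b2) = S2"
    by (rule frac_helper[OF d]) (simp add: algebra_simps)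
  show ?thesis using 1 2 by (simp add: y phi_def Linv_def)
qed

lemma phi_Pcal: "S \<in> Psig \<Longrightarrow> phi b1 b2 S \<in> Pcal"
  by (cases S) (simp add: phi_def Psig_def Pcal_def)

lemma Linv_Psig: "b1 \<noteq> b2 \<Longrightarrow> y \<in> Pcal \<Longrightarrow> Linv b1 b2 y \<in> Psig"
proof -
  assume b: "b1 \<noteq> b2" and y: "y \<in> Pcal"
  have "snd (phi b1 b2 (Linv b1 b2 y)) \<ge> 0" using y by (simp add: phi_Linv[OF b] Pcal_def split_beta)
  then show ?thesis by (simp add: phi_def Psig_def split_beta)
qed

lemma phi_inv_eq: "b1 \<noteq> b2 \<Longrightarrow> y \<in> Pcal \<Longrightarrow> phi_inv b1 b2 y = Linv b1 b2 y"
  unfolding phi_inv_def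
  by (rule inv_into_f_eq) (auto intro: Linv_Psig phi_Linv inj_on_inverseI[where g="Linv b1 b2"] Linv_phi)

lemma phi_inv_phi: "b1 \<noteq> b2 \<Longrightarrow> S \<in> Psig \<Longrightarrow> phi_inv b1 b2 (phi b1 b2 S) = S"
  using phi_inv_eq[OF _ phi_Pcal] Linv_phi by metis

lemma phi_deriv: "(phi b1 b2 has_derivative (\<lambda>h. (b1 * fst h + b2 * snd h, - fst h - snd h))) (at x)"
  unfolding phi_def[abs_def]
  by (auto intro!: derivative_eq_intros)

lemma Linv_deriv: "(Linv b1 b2 has_derivative (\<lambda>h. ((fst h + b2 * snd h) / (b1 - b2), (- b1 * snd h - fst h) / (b1 - b2)))) (at x)"
proof -
  have e: "Linv b1 b2 = (\<lambda>y. (inverse (b1 - b2) * (fst y + b2 * snd y - b2), inverse (b1 - b2) * (b1 - b1 * snd y - fst y)))"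
    by (rule ext) (simp add: Linv_def divide_inverse algebra_simps)
  show ?thesis unfolding e
    by (auto intro!: derivative_eq_intros simp: divide_inverse algebra_simps)
qed

lemma push_eq:
  assumes b: "b1 \<noteq> b2" and S: "S \<in> Psig"
  shows "pushforward (phi b1 b2) (phi_inv b1 b2) F (phi b1 b2 S) = (b1 * fst (F S) + b2 * snd (F S), - fst (F S) - snd (F S))"
  unfolding pushforward_def phi_inv_phi[OF b S] frechet_derivative_at[OF phi_deriv, symmetric] by simp



lemma K1:
  assumes b: "b1 \<noteq> b2" and S: "S \<in> Psig"
  shows "fmap b1 b2 Om1 Om2 g1 g2 (phi b1 b2 S) = b1 * fst (Fvf b1 b2 Om1 Om2 g1 g2 S) + b2 * snd (Fvf b1 b2 Om1 Om2 g1 g2 S)"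
proof -
  obtain S1 S2 where s: "S = (S1, S2)" by (cases S)
  have pi: "phi_inv b1 b2 (phi b1 b2 S) = S" by (rule phi_inv_phi[OF b S])
  show ?thesis
    unfolding fmap_def Pfun_def Qfun_def o_def pi
    by (simp add: s phi_def Fvf_def Let_def Ifun_def algebra_simps)
qed

lemma K2: "fst (Fvf b1 b2 Om1 Om2 g1 g2 S) + snd (Fvf b1 b2 Om1 Om2 g1 g2 S)
    = (g1 + g2 - (b1 * fst S + b2 * snd S)) * (1 - fst S - snd S)"
  by (simp add: Fvf_def Let_def algebra_simps)

lemma part_i_S:
  assumes b: "b1 \<noteq> b2" and S: "S \<in> Psig" and g: "g1 + g2 = 1"
  shows "pushforward (phi b1 b2) (phi_inv b1 b2) (Fvf b1 b2 Om1 Om2 g1 g2) (phi b1 b2 S)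
       = Vf (fmap b1 b2 Om1 Om2 g1 g2) (phi b1 b2 S)"
proof -
  have k2: "- fst (Fvf b1 b2 Om1 Om2 g1 g2 S) - snd (Fvf b1 b2 Om1 Om2 g1 g2 S)
      = (fst (phi b1 b2 S) - 1) * snd (phi b1 b2 S)"
    using K2[of b1 b2 Om1 Om2 g1 g2 S] g by (simp add: phi_def algebra_simps)
  show ?thesis unfolding push_eq[OF b S] Vf_def K1[OF b S] k2 ..
qed

lemma part_i:
  assumes b: "b1 \<noteq> b2" and y: "y \<in> Pcal" and g: "g1 + g2 = 1"
  shows "pushforward (phi b1 b2) (phi_inv b1 b2) (Fvf b1 b2 Om1 Om2 g1 g2) y
       = Vf (fmap b1 b2 Om1 Om2 g1 g2) y"
  using part_i_S[OF b Linv_Psig[OF b y] g] unfolding phi_Linv[OF b] .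

lemma Linv_cont: "isCont (Linv b1 b2) x"
  using Linv_deriv has_derivative_continuous by blast

lemma phi_cont: "isCont (phi b1 b2) x"
  using phi_deriv has_derivative_continuous by blast

lemma fmap_smooth:
  assumes b: "b1 \<noteq> b2" and o1: "smooth_on Psig Om1" and o2: "smooth_on Psig Om2"
  shows "smooth_on Pcal (fmap b1 b2 Om1 Om2 g1 g2)"
proof -
  obtain U1 k1 where U1: "open U1" "Psig \<subseteq> U1" "smooth_open U1 k1" "\<forall>x\<in>Psig. k1 x = Om1 x"
    using o1 unfolding smooth_on_def by blast
  obtain U2 k2 where U2: "open U2" "Psig \<subseteq> U2" "smooth_open U2 k2" "\<forall>x\<in>Psig. k2 x = Om2 x"
    using o2 unfolding smooth_on_def by blast
  define V where "V = U1 \<inter> U2"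
  have oV: "open V" using U1 U2 by (simp add: V_def open_Int)
  define U where "U = Linv b1 b2 -` V"
  have oU: "open U" unfolding U_def by (rule continuous_open_vimage[OF oV Linv_cont])
  have PU: "Pcal \<subseteq> U"
  proof
    fix y assume y: "y \<in> Pcal"
    have L: "Linv b1 b2 y \<in> Psig" by (rule Linv_Psig[OF b y])
    have "Linv b1 b2 y \<in> U1" "Linv b1 b2 y \<in> U2" using U1(2) U2(2) L by blast+
    then show "y \<in> U" by (simp add: U_def V_def)
  qed
  have ck1: "smooth_open U (\<lambda>y. k1 (Linv b1 b2 y))"
    by (rule smooth_comp[OF oV smooth_open_mono[OF _ U1(3)] Linv_deriv]) (auto simp: U_def V_def)
  have ck2: "smooth_open U (\<lambda>y. k2 (Linv b1 b2 y))"
    by (rule smooth_comp[OF oV smooth_open_mono[OF _ U2(3)] Linv_deriv]) (auto simp: U_def V_def)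
  have cI: "smooth_open U (\<lambda>y. Ifun (Linv b1 b2 y))"
    by (rule smooth_comp[OF open_UNIV smooth_Ifun Linv_deriv]) simp
  define F where "F y = (b1 * g1 + b2 * g2) * snd y
     + (1 - snd y) * (b1 * k2 (Linv b1 b2 y) + b2 * k1 (Linv b1 b2 y) + b1 * b2 * Ifun (Linv b1 b2 y))
     + fst y * (- (k1 (Linv b1 b2 y) + k2 (Linv b1 b2 y) + (b1 + b2) * Ifun (Linv b1 b2 y)))" for y
  have sF: "smooth_open U F"
    unfolding F_def
    by (intro smooth_add smooth_mult smooth_diff smooth_uminus smooth_const smooth_fst' smooth_snd' ck1 ck2 cI oU)
  have eq: "F y = fmap b1 b2 Om1 Om2 g1 g2 y" if y: "y \<in> Pcal" for y
  proof -
    have L: "Linv b1 b2 y \<in> Psig" by (rule Linv_Psig[OF b y])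
    show ?thesis
      unfolding F_def fmap_def Pfun_def Qfun_def o_def phi_inv_eq[OF b y]
      using U1(4) U2(4) L by simp
  qed
  show ?thesis unfolding smooth_on_def using oU PU sF eq by blast
qed

lemma part_ii_inj:
  assumes b: "b1 \<noteq> b2" and g: "g1 + g2 = 1" and g': "g1' + g2' = 1"
  shows "(\<forall>x\<in>Psig. Fvf b1 b2 Om1 Om2 g1 g2 x = Fvf b1 b2 Om1' Om2' g1' g2' x)
        \<longleftrightarrow> (\<forall>y\<in>Pcal. fmap b1 b2 Om1 Om2 g1 g2 y = fmap b1 b2 Om1' Om2' g1' g2' y)"
proof
  assume H: "\<forall>x\<in>Psig. Fvf b1 b2 Om1 Om2 g1 g2 x = Fvf b1 b2 Om1' Om2' g1' g2' x"
  show "\<forall>y\<in>Pcal. fmap b1 b2 Om1 Om2 g1 g2 y = fmap b1 b2 Om1' Om2' g1' g2' y"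
  proof
    fix y assume y: "y \<in> Pcal"
    have L: "Linv b1 b2 y \<in> Psig" by (rule Linv_Psig[OF b y])
    show "fmap b1 b2 Om1 Om2 g1 g2 y = fmap b1 b2 Om1' Om2' g1' g2' y"
      using K1[OF b L, of Om1 Om2 g1 g2] K1[OF b L, of Om1' Om2' g1' g2'] H L
      unfolding phi_Linv[OF b] by simp
  qed
next
  assume H: "\<forall>y\<in>Pcal. fmap b1 b2 Om1 Om2 g1 g2 y = fmap b1 b2 Om1' Om2' g1' g2' y"
  show "\<forall>x\<in>Psig. Fvf b1 b2 Om1 Om2 g1 g2 x = Fvf b1 b2 Om1' Om2' g1' g2' x"
  proof
    fix S assume S: "S \<in> Psig"
    define u where "u = fst (Fvf b1 b2 Om1 Om2 g1 g2 S)"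
    define v where "v = snd (Fvf b1 b2 Om1 Om2 g1 g2 S)"
    define u' where "u' = fst (Fvf b1 b2 Om1' Om2' g1' g2' S)"
    define v' where "v' = snd (Fvf b1 b2 Om1' Om2' g1' g2' S)"
    have e1: "b1 * u + b2 * v = b1 * u' + b2 * v'"
      using K1[OF b S, of Om1 Om2 g1 g2] K1[OF b S, of Om1' Om2' g1' g2'] H phi_Pcal[OF S]
      unfolding u_def v_def u'_def v'_def by simp
    have e2: "u + v = u' + v'"
      using K2[of b1 b2 Om1 Om2 g1 g2 S] K2[of b1 b2 Om1' Om2' g1' g2' S] g g'
      unfolding u_def v_def u'_def v'_def by simp
    have vv0: "v = u' + v' - u" using e2 by simp
    have "b1 * u + b2 * (u' + v' - u) = b1 * u' + b2 * v'" using e1 unfolding vv0 .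
    then have "(b1 - b2) * (u - u') = 0" by (simp add: algebra_simps)
    then have uu: "u = u'" using b by simp
    then have vv: "v = v'" using e2 by simp
    show "Fvf b1 b2 Om1 Om2 g1 g2 S = Fvf b1 b2 Om1' Om2' g1' g2' S"
      using uu vv unfolding u_def v_def u'_def v'_def by (simp add: prod_eq_iff)
  qed
qed



lemma Pcal_seg: "I \<ge> 0 \<Longrightarrow> (a, I) \<in> Pcal"
  by (simp add: Pcal_def)

lemma QP_exist:
  assumes f: "smooth_on Pcal f"
  shows "\<exists>Qf Pf. smooth_on Pcal Qf \<and> smooth_on {0..} Pf \<and>
          (\<forall>X I. I \<ge> 0 \<longrightarrow> X \<noteq> 0 \<longrightarrow> Qf (X, I) = (f (X, I) - f (0, I)) / X) \<and>
          (\<forall>I. I \<ge> 0 \<longrightarrow> I \<noteq> 1 \<longrightarrow> Pf I = (f (0, I) - f (0, 1) * I) / (1 - I))"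
proof -
  obtain U0 g0 where U0: "open U0" "Pcal \<subseteq> U0" "smooth_open U0 g0" "\<forall>x\<in>Pcal. g0 x = f x"
    using f unfolding smooth_on_def by blast
  obtain G0 where G0: "\<forall>b. smooth_open U0 (G0 b)" "pds U0 g0 G0" using smooth_dest[OF U0(1) U0(3)] by blast
  have inU0: "(a, I) \<in> U0" if "I \<ge> 0" for a I using U0(2) Pcal_seg[OF that] by blast
  define T0 where "T0 = {p. \<forall>t\<in>{0..1::real}. (t * fst p, snd p) \<in> U0}"
  have oT0: "open T0" unfolding T0_def by (rule tube_open[OF U0(1)])
  have PT0: "Pcal \<subseteq> T0"
  proof
    fix p :: "real \<times> real" assume p: "p \<in> Pcal"
    then have "snd p \<ge> 0" by (simp add: Pcal_def split_beta)
    then show "p \<in> T0" unfolding T0_def using inU0 by simp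
  qed
  define Qf where "Qf = hint 0 (G0 (1,0))"
  have sQ: "smooth_open T0 Qf" unfolding Qf_def
    by (rule hint_smooth[OF U0(1) G0(1)[rule_format] oT0]) (simp add: T0_def)
  have Qf_eq: "Qf (X, I) = (f (X, I) - f (0, I)) / X" if "I \<ge> 0" "X \<noteq> 0" for X I
  proof -
    have "Qf (X, I) = (g0 (X, I) - g0 (0, I)) / X"
      unfolding Qf_def by (rule hint_eq[OF G0(2) that(2)]) (rule inU0[OF that(1)])
    then show ?thesis using U0(4) Pcal_seg[OF that(1)] by simp
  qed
  have QS: "smooth_on Pcal Qf" unfolding smooth_on_def using oT0 PT0 sQ by blast
  define M where "M p = (0::real, 1 + fst p)" for p :: "real \<times> real"
  have dM: "(M has_derivative (\<lambda>h. (0, fst h))) (at x)" for x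
    unfolding M_def[abs_def] by (auto intro!: derivative_eq_intros)
  define W1 where "W1 = M -` U0"
  have oW1: "open W1" unfolding W1_def
    by (rule continuous_open_vimage[OF U0(1)]) (use dM has_derivative_continuous in blast)
  define h1 where "h1 p = g0 (M p)" for p
  have sh1: "smooth_open W1 h1" unfolding h1_def[abs_def]
    by (rule smooth_comp[OF U0(1) U0(3) dM]) (simp add: W1_def)
  obtain G1 where G1: "\<forall>b. smooth_open W1 (G1 b)" "pds W1 h1 G1" using smooth_dest[OF oW1 sh1] by blast
  define T1 where "T1 = {p. \<forall>t\<in>{0..1::real}. (t * fst p, snd p) \<in> W1}"
  have oT1: "open T1" unfolding T1_def by (rule tube_open[OF oW1])
  define q1 where "q1 = hint 0 (G1 (1,0))"
  have sq1: "smooth_open T1 q1" unfolding q1_def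
    by (rule hint_smooth[OF oW1 G1(1)[rule_format] oT1]) (simp add: T1_def)
  define N where "N I = (I - 1, 0::real)" for I :: real
  have dN: "(N has_derivative (\<lambda>h. (h, 0))) (at x)" for x
    unfolding N_def[abs_def] by (auto intro!: derivative_eq_intros)
  define V1 where "V1 = N -` T1"
  have oV1: "open V1" unfolding V1_def
    by (rule continuous_open_vimage[OF oT1]) (use dN has_derivative_continuous in blast)
  have segW1: "(t * (I - 1), 0) \<in> W1" if "I \<ge> 0" "t \<in> {0..1::real}" for I t
  proof -
    have "0 \<le> (1 - t) + t * I" using that by (simp add: mult_nonneg_nonneg)
    then have "1 + t * (I - 1) \<ge> 0" by (simp add: algebra_simps)
    then show ?thesis using inU0 by (simp add: W1_def M_def)
  qed
  have V1: "{0..} \<subseteq> V1"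
  proof
    fix I :: real assume "I \<in> {0..}"
    then have I: "I \<ge> 0" by simp
    show "I \<in> V1" unfolding V1_def T1_def N_def using segW1[OF I] by simp
  qed
  define Pf where "Pf I = f (0, 1) - q1 (N I)" for I
  have sP: "smooth_open V1 Pf" unfolding Pf_def[abs_def]
    by (rule smooth_diff[OF oV1 smooth_const smooth_comp[OF oT1 sq1 dN]]) (simp add: V1_def)
  have PS: "smooth_on {0..} Pf" unfolding smooth_on_def using oV1 V1 sP by blast
  have Pf_eq: "Pf I = (f (0, I) - f (0, 1) * I) / (1 - I)" if I: "I \<ge> 0" "I \<noteq> 1" for I
  proof -
    have nz: "I - 1 \<noteq> 0" using I by simp
    have "q1 (I - 1, 0) = (h1 (I - 1, 0) - h1 (0, 0)) / (I - 1)"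
      unfolding q1_def by (rule hint_eq[OF G1(2) nz]) (rule segW1[OF I(1)])
    also have "\<dots> = (f (0, I) - f (0, 1)) / (I - 1)"
      using U0(4) Pcal_seg[OF I(1)] Pcal_seg[of 1] by (simp add: h1_def M_def)
    finally have q: "q1 (N I) = (f (0, I) - f (0, 1)) / (I - 1)" by (simp add: N_def)
    have nz2: "1 - I \<noteq> 0" using I by simp
    show ?thesis unfolding Pf_def q using nz nz2 by (simp add: field_simps)
  qed
  show ?thesis using QS PS Qf_eq Pf_eq by blast
qed



lemma Ifun_phi: "Ifun S = snd (phi b1 b2 S)"
  by (simp add: Ifun_def phi_def)

lemma Pfun_y:
  assumes b: "b1 \<noteq> b2" and y: "y \<in> Pcal"
  shows "Pfun b1 b2 Om1 Om2 y = b1 * Om2 (Linv b1 b2 y) + b2 * Om1 (Linv b1 b2 y) + b1 * b2 * snd y"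
  unfolding Pfun_def o_def phi_inv_eq[OF b y] Ifun_phi[of _ b1 b2] phi_Linv[OF b] ..

lemma Qfun_y:
  assumes b: "b1 \<noteq> b2" and y: "y \<in> Pcal"
  shows "Qfun b1 b2 Om1 Om2 y = - (Om1 (Linv b1 b2 y) + Om2 (Linv b1 b2 y) + (b1 + b2) * snd y)"
  unfolding Qfun_def o_def phi_inv_eq[OF b y] Ifun_phi[of _ b1 b2] phi_Linv[OF b] ..

lemma alg1:
  fixes b1 b2 o1 o2 p q i :: real
  assumes b: "b1 \<noteq> b2" and h1: "o1 = (p + b1 * q + b1\<^sup>2 * i) / (b2 - b1)"
    and h2: "o2 = (p + b2 * q + b2\<^sup>2 * i) / (b1 - b2)"
  shows "b1 * o2 + b2 * o1 + b1 * b2 * i = p" "- (o1 + o2 + (b1 + b2) * i) = q"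
proof -
  have d1: "b2 - b1 \<noteq> 0" "b1 - b2 \<noteq> 0" using b by auto
  have e1: "o1 * (b2 - b1) = p + b1 * q + b1\<^sup>2 * i" using h1 d1 by simp
  have e2: "o2 * (b1 - b2) = p + b2 * q + b2\<^sup>2 * i" using h2 d1 by simp
  have "(b1 - b2) * (b1 * o2 + b2 * o1 + b1 * b2 * i - p)
      = b1 * (o2 * (b1 - b2)) - b2 * (o1 * (b2 - b1)) - (b1 - b2) * p + (b1 - b2) * b1 * b2 * i"
    by (simp add: algebra_simps)
  also have "\<dots> = 0" unfolding e1 e2 by (simp add: algebra_simps power2_eq_square)
  finally show "b1 * o2 + b2 * o1 + b1 * b2 * i = p" using d1 by simp
  have "(b1 - b2) * (- (o1 + o2 + (b1 + b2) * i) - q)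
      = (o1 * (b2 - b1)) - (o2 * (b1 - b2)) - (b1 - b2) * (b1 + b2) * i - (b1 - b2) * q"
    by (simp add: algebra_simps)
  also have "\<dots> = 0" unfolding e1 e2 by (simp add: algebra_simps power2_eq_square)
  finally show "- (o1 + o2 + (b1 + b2) * i) = q" using d1 by simp
qed

lemma alg2:
  fixes b1 b2 o1 o2 p q i :: real
  assumes b: "b1 \<noteq> b2" and h1: "p = b1 * o2 + b2 * o1 + b1 * b2 * i"
    and h2: "q = - (o1 + o2 + (b1 + b2) * i)"
  shows "o1 = (p + b1 * q + b1\<^sup>2 * i) / (b2 - b1)" "o2 = (p + b2 * q + b2\<^sup>2 * i) / (b1 - b2)"
proof -
  have d1: "b2 - b1 \<noteq> 0" "b1 - b2 \<noteq> 0" using b by auto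
  have "p + b1 * q + b1\<^sup>2 * i = o1 * (b2 - b1)" unfolding h1 h2 by (simp add: algebra_simps power2_eq_square)
  then show "o1 = (p + b1 * q + b1\<^sup>2 * i) / (b2 - b1)" using d1 by simp
  have "p + b2 * q + b2\<^sup>2 * i = o2 * (b1 - b2)" unfolding h1 h2 by (simp add: algebra_simps power2_eq_square)
  then show "o2 = (p + b2 * q + b2\<^sup>2 * i) / (b1 - b2)" using d1 by simp
qed

lemma alg3:
  fixes b1 b2 f01 :: real
  assumes "b1 \<noteq> b2"
  shows "b1 * ((f01 - b2) / (b1 - b2)) + b2 * ((b1 - f01) / (b1 - b2)) = f01"
proof -
  have d: "b1 - b2 \<noteq> 0" using assms by simp
  show ?thesis unfolding lin2 by (rule frac_helper[OF d]) (simp add: algebra_simps)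
qed



lemma fmap_f:
  fixes f Qf :: "real \<times> real \<Rightarrow> real" and Pf :: "real \<Rightarrow> real"
  assumes Qeq: "\<forall>X I. I \<ge> 0 \<longrightarrow> X \<noteq> 0 \<longrightarrow> Qf (X, I) = (f (X, I) - f (0, I)) / X"
    and Peq: "\<forall>I. I \<ge> 0 \<longrightarrow> I \<noteq> 1 \<longrightarrow> Pf I = (f (0, I) - f (0, 1) * I) / (1 - I)"
    and I: "I \<ge> 0"
  shows "f (0, 1) * I + (1 - I) * Pf I + X * Qf (X, I) = f (X, I)"
proof (cases "I = 1")
  case True
  show ?thesis
  proof (cases "X = 0")
    case True then show ?thesis using \<open>I = 1\<close> by simp
  next
    case False then show ?thesis using \<open>I = 1\<close> Qeq by simp
  qed
next
  case False
  then have nz: "1 - I \<noteq> 0" by simp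
  have p: "(1 - I) * Pf I = f (0, I) - f (0, 1) * I" using Peq I False nz by simp
  show ?thesis
  proof (cases "X = 0")
    case True then show ?thesis using p by simp
  next
    case Xn: False
    have "X * Qf (X, I) = f (X, I) - f (0, I)" using Qeq I Xn by simp
    then show ?thesis using p by simp
  qed
qed

lemma UNIQ_if:
  fixes b1 b2 :: real and f Qf :: "real \<times> real \<Rightarrow> real" and Pf :: "real \<Rightarrow> real"
  assumes b: "b1 > b2" and Q: "smooth_on Pcal Qf" and P: "smooth_on {0..} Pf"
    and Qeq: "\<forall>X I. I \<ge> 0 \<longrightarrow> X \<noteq> 0 \<longrightarrow> Qf (X, I) = (f (X, I) - f (0, I)) / X"
    and Peq: "\<forall>I. I \<ge> 0 \<longrightarrow> I \<noteq> 1 \<longrightarrow> Pf I = (f (0, I) - f (0, 1) * I) / (1 - I)"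
    and F1: "\<forall>S\<in>Psig. Om1 S = (\<lambda>y. (Pf (snd y) + b1 * Qf y + b1\<^sup>2 * snd y) / (b2 - b1)) (phi b1 b2 S)"
    and F2: "\<forall>S\<in>Psig. Om2 S = (\<lambda>y. (Pf (snd y) + b2 * Qf y + b2\<^sup>2 * snd y) / (b1 - b2)) (phi b1 b2 S)"
    and G1: "g1 = (f (0, 1) - b2) / (b1 - b2)" and G2: "g2 = (b1 - f (0, 1)) / (b1 - b2)"
  shows "admissible Om1 Om2 g1 g2 \<and>
         (\<forall>X X' I. I \<ge> 0 \<longrightarrow> Pfun b1 b2 Om1 Om2 (X, I) = Pfun b1 b2 Om1 Om2 (X', I)) \<and>
         (\<forall>y\<in>Pcal. pushforward (phi b1 b2) (phi_inv b1 b2) (Fvf b1 b2 Om1 Om2 g1 g2) y = Vf f y)"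
proof -
  have bne: "b1 \<noteq> b2" using b by simp
  have PQ: "Pfun b1 b2 Om1 Om2 y = Pf (snd y) \<and> Qfun b1 b2 Om1 Om2 y = Qf y" if y: "y \<in> Pcal" for y
  proof -
    have S: "Linv b1 b2 y \<in> Psig" by (rule Linv_Psig[OF bne y])
    have o1: "Om1 (Linv b1 b2 y) = (Pf (snd y) + b1 * Qf y + b1\<^sup>2 * snd y) / (b2 - b1)"
      using F1 S by (simp add: phi_Linv[OF bne])
    have o2: "Om2 (Linv b1 b2 y) = (Pf (snd y) + b2 * Qf y + b2\<^sup>2 * snd y) / (b1 - b2)"
      using F2 S by (simp add: phi_Linv[OF bne])
    show ?thesis unfolding Pfun_y[OF bne y] Qfun_y[OF bne y] using alg1[OF bne o1 o2] by simp
  qed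
  obtain UQ kQ where UQ: "open UQ" "Pcal \<subseteq> UQ" "smooth_open UQ kQ" "\<forall>x\<in>Pcal. kQ x = Qf x"
    using Q unfolding smooth_on_def by blast
  obtain UP kP where UP: "open UP" "{0..} \<subseteq> UP" "smooth_open UP kP" "\<forall>x\<in>{0..}. kP x = Pf x"
    using P unfolding smooth_on_def by blast
  define sp where "sp S = snd (phi b1 b2 S)" for S
  have dsp: "(sp has_derivative (\<lambda>h. - fst h - snd h)) (at x)" for x
    unfolding sp_def[abs_def] using has_derivative_snd[OF phi_deriv[of b1 b2 x]] by simp
  define U where "U = phi b1 b2 -` UQ \<inter> sp -` UP"
  have oU: "open U" unfolding U_def
    by (intro open_Int continuous_open_vimage[OF UQ(1) phi_cont] continuous_open_vimage[OF UP(1)])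
       (use dsp has_derivative_continuous in blast)
  have PsU: "Psig \<subseteq> U"
  proof
    fix S assume S: "S \<in> Psig"
    have "phi b1 b2 S \<in> Pcal" by (rule phi_Pcal[OF S])
    then have "phi b1 b2 S \<in> UQ" "sp S \<in> UP" using UQ(2) UP(2)
      by (auto simp: sp_def Pcal_def split_beta)
    then show "S \<in> U" by (simp add: U_def)
  qed
  have ssp: "smooth_open U sp"
  proof -
    have "sp = (\<lambda>S. Ifun S)" by (rule ext) (simp add: sp_def Ifun_phi[of _ b1 b2])
    then show ?thesis using smooth_Ifun by simp
  qed
  have skP: "smooth_open U (\<lambda>S. kP (sp S))"
    by (rule smooth_comp[OF UP(1) UP(3) dsp]) (simp add: U_def)
  have skQ: "smooth_open U (\<lambda>S. kQ (phi b1 b2 S))"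
    by (rule smooth_comp[OF UQ(1) UQ(3) phi_deriv]) (simp add: U_def)
  have kvals: "kP (sp S) = Pf (snd (phi b1 b2 S)) \<and> kQ (phi b1 b2 S) = Qf (phi b1 b2 S)" if S: "S \<in> Psig" for S
  proof -
    have pc: "phi b1 b2 S \<in> Pcal" by (rule phi_Pcal[OF S])
    then have "snd (phi b1 b2 S) \<in> {0..}" by (simp add: Pcal_def split_beta)
    then show ?thesis using UQ(4) UP(4) pc by (simp add: sp_def)
  qed
  have sO1: "smooth_on Psig Om1"
  proof -
    define K where "K S = (kP (sp S) + b1 * kQ (phi b1 b2 S) + b1\<^sup>2 * sp S) / (b2 - b1)" for S
    have "smooth_open U K" unfolding K_def
      by (intro smooth_divc smooth_add smooth_cmul skP skQ ssp oU)
    moreover have "\<forall>S\<in>Psig. K S = Om1 S" using F1 kvals by (simp add: K_def sp_def)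
    ultimately show ?thesis unfolding smooth_on_def using oU PsU by blast
  qed
  have sO2: "smooth_on Psig Om2"
  proof -
    define K where "K S = (kP (sp S) + b2 * kQ (phi b1 b2 S) + b2\<^sup>2 * sp S) / (b1 - b2)" for S
    have "smooth_open U K" unfolding K_def
      by (intro smooth_divc smooth_add smooth_cmul skP skQ ssp oU)
    moreover have "\<forall>S\<in>Psig. K S = Om2 S" using F2 kvals by (simp add: K_def sp_def)
    ultimately show ?thesis unfolding smooth_on_def using oU PsU by blast
  qed
  have gs: "g1 + g2 = 1"
  proof -
    have d: "b1 - b2 \<noteq> 0" using bne by simp
    have "g1 + g2 = ((f (0, 1) - b2) + (b1 - f (0, 1))) / (b1 - b2)" unfolding G1 G2 by (rule add_divide_distrib[symmetric])
    also have "\<dots> = 1" using d by simp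
    finally show ?thesis .
  qed
  have adm: "admissible Om1 Om2 g1 g2" unfolding admissible_def using sO1 sO2 gs by blast
  have indep: "\<forall>X X' I. I \<ge> 0 \<longrightarrow> Pfun b1 b2 Om1 Om2 (X, I) = Pfun b1 b2 Om1 Om2 (X', I)"
  proof (intro allI impI)
    fix X X' I :: real assume I: "I \<ge> 0"
    show "Pfun b1 b2 Om1 Om2 (X, I) = Pfun b1 b2 Om1 Om2 (X', I)"
      using PQ[OF Pcal_seg[OF I, of X]] PQ[OF Pcal_seg[OF I, of X']] by simp
  qed
  have lam: "b1 * g1 + b2 * g2 = f (0, 1)" unfolding G1 G2 by (rule alg3[OF bne])
  have push: "\<forall>y\<in>Pcal. pushforward (phi b1 b2) (phi_inv b1 b2) (Fvf b1 b2 Om1 Om2 g1 g2) y = Vf f y"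
  proof
    fix y assume y: "y \<in> Pcal"
    obtain X I where yy: "y = (X, I)" by (cases y)
    have I: "I \<ge> 0" using y yy by (simp add: Pcal_def)
    have "fmap b1 b2 Om1 Om2 g1 g2 y = f (0, 1) * I + (1 - I) * Pf I + X * Qf (X, I)"
      unfolding fmap_def lam using PQ[OF y] yy by simp
    also have "\<dots> = f y" unfolding yy by (rule fmap_f[OF Qeq Peq I])
    finally have fm: "fmap b1 b2 Om1 Om2 g1 g2 y = f y" .
    show "pushforward (phi b1 b2) (phi_inv b1 b2) (Fvf b1 b2 Om1 Om2 g1 g2) y = Vf f y"
      unfolding part_i[OF bne y gs] by (simp add: Vf_def fm)
  qed
  show ?thesis using adm indep push by blast
qed



lemma isCont_Linv_line1: "isCont (\<lambda>I. Linv b1 b2 (0, I)) a"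
  by (rule isCont_o2[OF _ Linv_cont]) (intro continuous_intros)

lemma isCont_Linv_line2: "isCont (\<lambda>X. Linv b1 b2 (X, I)) a"
  by (rule isCont_o2[OF _ Linv_cont]) (intro continuous_intros)

lemma cont_on_at: "open U \<Longrightarrow> continuous_on U k \<Longrightarrow> x \<in> U \<Longrightarrow> isCont k x"
  using continuous_on_eq_continuous_at by blast

lemma UNIQ_only_if:
  fixes b1 b2 :: real and f Qf :: "real \<times> real \<Rightarrow> real" and Pf :: "real \<Rightarrow> real"
  assumes b: "b1 > b2" and Q: "smooth_on Pcal Qf" and P: "smooth_on {0..} Pf"
    and Qeq: "\<forall>X I. I \<ge> 0 \<longrightarrow> X \<noteq> 0 \<longrightarrow> Qf (X, I) = (f (X, I) - f (0, I)) / X"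
    and Peq: "\<forall>I. I \<ge> 0 \<longrightarrow> I \<noteq> 1 \<longrightarrow> Pf I = (f (0, I) - f (0, 1) * I) / (1 - I)"
    and adm: "admissible Om1 Om2 g1 g2"
    and indep: "\<forall>X X' I. I \<ge> 0 \<longrightarrow> Pfun b1 b2 Om1 Om2 (X, I) = Pfun b1 b2 Om1 Om2 (X', I)"
    and push: "\<forall>y\<in>Pcal. pushforward (phi b1 b2) (phi_inv b1 b2) (Fvf b1 b2 Om1 Om2 g1 g2) y = Vf f y"
  shows "(\<forall>S\<in>Psig. Om1 S = (\<lambda>y. (Pf (snd y) + b1 * Qf y + b1\<^sup>2 * snd y) / (b2 - b1)) (phi b1 b2 S)) \<and>
         (\<forall>S\<in>Psig. Om2 S = (\<lambda>y. (Pf (snd y) + b2 * Qf y + b2\<^sup>2 * snd y) / (b1 - b2)) (phi b1 b2 S)) \<and>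
         g1 = (f (0, 1) - b2) / (b1 - b2) \<and>
         g2 = (b1 - f (0, 1)) / (b1 - b2)"
proof -
  have bne: "b1 \<noteq> b2" using b by simp
  have d: "b1 - b2 \<noteq> 0" using bne by simp
  have gs: "g1 + g2 = 1" and so1: "smooth_on Psig Om1" and so2: "smooth_on Psig Om2"
    using adm unfolding admissible_def by auto
  have fm: "fmap b1 b2 Om1 Om2 g1 g2 y = f y" if y: "y \<in> Pcal" for y
  proof -
    have "pushforward (phi b1 b2) (phi_inv b1 b2) (Fvf b1 b2 Om1 Om2 g1 g2) y = Vf f y" using push y by blast
    then have "Vf (fmap b1 b2 Om1 Om2 g1 g2) y = Vf f y" by (simp only: part_i[OF bne y gs])
    then show ?thesis by (simp add: Vf_def)
  qed
  have lam: "b1 * g1 + b2 * g2 = f (0, 1)"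
    using fm[OF Pcal_seg[of 1 0]] by (simp add: fmap_def)
  have g1v: "g1 = (f (0, 1) - b2) / (b1 - b2)"
  proof -
    have g2: "g2 = 1 - g1" using gs by simp
    have "b1 * g1 + b2 * (1 - g1) = f (0, 1)" using lam unfolding g2 .
    then have "g1 * (b1 - b2) = f (0, 1) - b2" by (simp add: algebra_simps)
    then show ?thesis using d by (simp add: eq_divide_eq)
  qed
  have g2v: "g2 = (b1 - f (0, 1)) / (b1 - b2)"
  proof -
    have g1: "g1 = 1 - g2" using gs by simp
    have "b1 * (1 - g2) + b2 * g2 = f (0, 1)" using lam unfolding g1 .
    then have "g2 * (b1 - b2) = b1 - f (0, 1)" by (simp add: algebra_simps)
    then show ?thesis using d by (simp add: eq_divide_eq)
  qed
  have fm2: "f (X, I) = f (0, 1) * I + (1 - I) * Pfun b1 b2 Om1 Om2 (X, I) + X * Qfun b1 b2 Om1 Om2 (X, I)"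
    if "I \<ge> 0" for X I
    using fm[OF Pcal_seg[OF that, of X]] lam by (simp add: fmap_def)
  obtain U1 k1 where U1: "open U1" "Psig \<subseteq> U1" "continuous_on U1 k1" "\<forall>x\<in>Psig. k1 x = Om1 x"
    using smooth_on_cont[OF so1] by blast
  obtain U2 k2 where U2: "open U2" "Psig \<subseteq> U2" "continuous_on U2 k2" "\<forall>x\<in>Psig. k2 x = Om2 x"
    using smooth_on_cont[OF so2] by blast
  obtain UP kP where UP: "open UP" "{0..} \<subseteq> UP" "continuous_on UP kP" "\<forall>x\<in>{0..}. kP x = Pf x"
    using smooth_on_cont[OF P] by blast
  obtain UQ kQ where UQ: "open UQ" "Pcal \<subseteq> UQ" "continuous_on UQ kQ" "\<forall>x\<in>Pcal. kQ x = Qf x"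
    using smooth_on_cont[OF Q] by blast
  have LP: "Linv b1 b2 (X, I) \<in> Psig" if "I \<ge> 0" for X I by (rule Linv_Psig[OF bne Pcal_seg[OF that]])
  have P0: "Pfun b1 b2 Om1 Om2 (0, I) = Pf I" if I: "I \<ge> 0" "I \<noteq> 1" for I
  proof -
    have nz: "1 - I \<noteq> 0" using I by simp
    have "f (0, I) = f (0, 1) * I + (1 - I) * Pfun b1 b2 Om1 Om2 (0, I)" using fm2[OF I(1), of 0] by simp
    then have "Pfun b1 b2 Om1 Om2 (0, I) = (f (0, I) - f (0, 1) * I) / (1 - I)"
      using nz by (simp add: eq_divide_eq algebra_simps)
    then show ?thesis using Peq I by simp
  qed
  have P1: "Pfun b1 b2 Om1 Om2 (0, 1) = Pf 1"
  proof -
    define f1 where "f1 I = b1 * k2 (Linv b1 b2 (0, I)) + b2 * k1 (Linv b1 b2 (0, I)) + b1 * b2 * I" for I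
    have L1: "Linv b1 b2 (0, 1) \<in> Psig" using LP[of 1 0] by simp
    have c1: "isCont f1 1" unfolding f1_def
      by (intro continuous_intros isCont_o2[OF isCont_Linv_line1 cont_on_at[OF U1(1) U1(3)]]
            isCont_o2[OF isCont_Linv_line1 cont_on_at[OF U2(1) U2(3)]])
         (use L1 U1(2) U2(2) in auto)
    have c2: "isCont kP 1" by (rule cont_on_at[OF UP(1) UP(3)]) (use UP(2) in auto)
    have f1v: "f1 I = Pfun b1 b2 Om1 Om2 (0, I)" if "I \<ge> 0" for I
      unfolding f1_def Pfun_y[OF bne Pcal_seg[OF that]] using U1(4) U2(4) LP[OF that, of 0] by simp
    have "f1 1 = kP 1"
    proof (rule cont_eq_at[OF c1 c2 zero_less_one])
      fix x :: real assume x: "x \<noteq> 1" "\<bar>x - 1\<bar> < 1"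
      then have x0: "x \<ge> 0" by simp
      show "f1 x = kP x" using f1v[OF x0] P0[OF x0 x(1)] UP(4) x0 by simp
    qed
    then show ?thesis using f1v[of 1] UP(4) by simp
  qed
  have PP: "Pfun b1 b2 Om1 Om2 (X, I) = Pf I" if I: "I \<ge> 0" for X I
  proof -
    have "Pfun b1 b2 Om1 Om2 (X, I) = Pfun b1 b2 Om1 Om2 (0, I)" using indep I by blast
    then show ?thesis using P0[OF I] P1 by (cases "I = 1") auto
  qed
  have QX: "Qfun b1 b2 Om1 Om2 (X, I) = Qf (X, I)" if I: "I \<ge> 0" "X \<noteq> 0" for X I
  proof -
    have "f (X, I) - f (0, I) = X * Qfun b1 b2 Om1 Om2 (X, I)"
      using fm2[OF I(1), of X] fm2[OF I(1), of 0] PP[OF I(1), of X] PP[OF I(1), of 0] by simp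
    moreover have "X * Qf (X, I) = f (X, I) - f (0, I)" using Qeq I by simp
    ultimately have "X * Qfun b1 b2 Om1 Om2 (X, I) = X * Qf (X, I)" by linarith
    then show ?thesis using I(2) by simp
  qed
  have QQ: "Qfun b1 b2 Om1 Om2 (X, I) = Qf (X, I)" if I: "I \<ge> 0" for X I
  proof (cases "X = 0")
    case False then show ?thesis using QX[OF I] by simp
  next
    case True
    define f1 where "f1 X = - (k1 (Linv b1 b2 (X, I)) + k2 (Linv b1 b2 (X, I)) + (b1 + b2) * I)" for X
    have L0: "Linv b1 b2 (0, I) \<in> Psig" using LP[OF I, of 0] .
    have c1: "isCont f1 0" unfolding f1_def
      by (intro continuous_intros isCont_o2[OF isCont_Linv_line2 cont_on_at[OF U1(1) U1(3)]]
            isCont_o2[OF isCont_Linv_line2 cont_on_at[OF U2(1) U2(3)]])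
         (use L0 U1(2) U2(2) in auto)
    have cQ: "isCont kQ (0, I)" by (rule cont_on_at[OF UQ(1) UQ(3)]) (use UQ(2) Pcal_seg[OF I] in auto)
    have c2: "isCont (\<lambda>X. kQ (X, I)) 0"
    proof -
      have "isCont (\<lambda>X::real. (X, I)) 0" by (intro continuous_intros)
      from isCont_o2[OF this cQ] show ?thesis by simp
    qed
    have f1v: "f1 X = Qfun b1 b2 Om1 Om2 (X, I)" for X
      unfolding f1_def Qfun_y[OF bne Pcal_seg[OF I]] using U1(4) U2(4) LP[OF I, of X] by simp
    have "f1 0 = kQ (0, I)"
    proof (rule cont_eq_at[OF c1 c2 zero_less_one])
      fix x :: real assume x: "x \<noteq> 0" "\<bar>x - 0\<bar> < 1"
      show "f1 x = kQ (x, I)" using f1v[of x] QX[OF I x(1)] UQ(4) Pcal_seg[OF I, of x] by simp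
    qed
    then show ?thesis using f1v[of 0] UQ(4) Pcal_seg[OF I, of 0] True by simp
  qed
  have OO: "Om1 S = (Pf (snd (phi b1 b2 S)) + b1 * Qf (phi b1 b2 S) + b1\<^sup>2 * snd (phi b1 b2 S)) / (b2 - b1)
          \<and> Om2 S = (Pf (snd (phi b1 b2 S)) + b2 * Qf (phi b1 b2 S) + b2\<^sup>2 * snd (phi b1 b2 S)) / (b1 - b2)"
    if S: "S \<in> Psig" for S
  proof -
    define y where "y = phi b1 b2 S"
    have y: "y \<in> Pcal" unfolding y_def by (rule phi_Pcal[OF S])
    have Ly: "Linv b1 b2 y = S" unfolding y_def by (rule Linv_phi[OF bne])
    have sy: "snd y \<ge> 0" using y by (simp add: Pcal_def split_beta)
    have py: "y = (fst y, snd y)" by simp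
    have hp: "Pf (snd y) = b1 * Om2 S + b2 * Om1 S + b1 * b2 * snd y"
      using Pfun_y[OF bne y, of Om1 Om2] PP[OF sy, of "fst y"] Ly by simp
    have hq: "Qf y = - (Om1 S + Om2 S + (b1 + b2) * snd y)"
      using Qfun_y[OF bne y, of Om1 Om2] QQ[OF sy, of "fst y"] Ly by simp
    show ?thesis using alg2[OF bne hp hq] unfolding y_def by simp
  qed
  show ?thesis using OO g1v g2v by simp
qed


theorem theorem3p8:
  fixes b1 b2 :: real
  assumes "b1 > b2"
  shows
   \<comment> \<open>(i)\<close>
   "(\<forall>Om1 Om2 g1 g2. admissible Om1 Om2 g1 g2 \<longrightarrow>
       (\<forall>y\<in>Pcal. pushforward (phi b1 b2) (phi_inv b1 b2) (Fvf b1 b2 Om1 Om2 g1 g2) y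
                   = Vf (fmap b1 b2 Om1 Om2 g1 g2) y))
    \<and>
   \<comment> \<open>(ii): well-defined map into C-infinity(Pcal), injective and surjective\<close>
    (\<forall>Om1 Om2 g1 g2. admissible Om1 Om2 g1 g2 \<longrightarrow> smooth_on Pcal (fmap b1 b2 Om1 Om2 g1 g2))
    \<and>
    (\<forall>Om1 Om2 g1 g2 Om1' Om2' g1' g2'.
       admissible Om1 Om2 g1 g2 \<longrightarrow> admissible Om1' Om2' g1' g2' \<longrightarrow>
       ((\<forall>x\<in>Psig. Fvf b1 b2 Om1 Om2 g1 g2 x = Fvf b1 b2 Om1' Om2' g1' g2' x)
        \<longleftrightarrow> (\<forall>y\<in>Pcal. fmap b1 b2 Om1 Om2 g1 g2 y = fmap b1 b2 Om1' Om2' g1' g2' y)))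
    \<and>
    (\<forall>f. smooth_on Pcal f \<longrightarrow>
       (\<exists>Om1 Om2 g1 g2. admissible Om1 Om2 g1 g2 \<and>
          (\<forall>y\<in>Pcal. fmap b1 b2 Om1 Om2 g1 g2 y = f y)))
    \<and>
   \<comment> \<open>(iii)\<close>
    (\<forall>f. smooth_on Pcal f \<longrightarrow>
       (\<exists>Qf :: real \<times> real \<Rightarrow> real. \<exists>Pf :: real \<Rightarrow> real.
          smooth_on Pcal Qf \<and> smooth_on {0..} Pf \<and>
          (\<forall>X I. I \<ge> 0 \<longrightarrow> X \<noteq> 0 \<longrightarrow> Qf (X, I) = (f (X, I) - f (0, I)) / X) \<and>
          (\<forall>I. I \<ge> 0 \<longrightarrow> I \<noteq> 1 \<longrightarrow> Pf I = (f (0, I) - f (0, 1) * I) / (1 - I)) \<and>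
          (\<exists>Om1 Om2 g1 g2. admissible Om1 Om2 g1 g2 \<and>
             (\<forall>X X' I. I \<ge> 0 \<longrightarrow> Pfun b1 b2 Om1 Om2 (X, I) = Pfun b1 b2 Om1 Om2 (X', I)) \<and>
             (\<forall>y\<in>Pcal. pushforward (phi b1 b2) (phi_inv b1 b2) (Fvf b1 b2 Om1 Om2 g1 g2) y = Vf f y)) \<and>
          (\<forall>Om1 Om2 g1 g2.
             (admissible Om1 Om2 g1 g2 \<and>
              (\<forall>X X' I. I \<ge> 0 \<longrightarrow> Pfun b1 b2 Om1 Om2 (X, I) = Pfun b1 b2 Om1 Om2 (X', I)) \<and>
              (\<forall>y\<in>Pcal. pushforward (phi b1 b2) (phi_inv b1 b2) (Fvf b1 b2 Om1 Om2 g1 g2) y = Vf f y))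
             \<longleftrightarrow>
             ((\<forall>S\<in>Psig. Om1 S = (\<lambda>y. (Pf (snd y) + b1 * Qf y + b1\<^sup>2 * snd y) / (b2 - b1)) (phi b1 b2 S)) \<and>
              (\<forall>S\<in>Psig. Om2 S = (\<lambda>y. (Pf (snd y) + b2 * Qf y + b2\<^sup>2 * snd y) / (b1 - b2)) (phi b1 b2 S)) \<and>
              g1 = (f (0, 1) - b2) / (b1 - b2) \<and>
              g2 = (b1 - f (0, 1)) / (b1 - b2)))))"
proof -
  have b: "b1 > b2" by (rule assms)
  have bne: "b1 \<noteq> b2" using b by simp
  have P1: "\<forall>Om1 Om2 g1 g2. admissible Om1 Om2 g1 g2 \<longrightarrow>
       (\<forall>y\<in>Pcal. pushforward (phi b1 b2) (phi_inv b1 b2) (Fvf b1 b2 Om1 Om2 g1 g2) y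
                   = Vf (fmap b1 b2 Om1 Om2 g1 g2) y)"
    using part_i[OF bne] unfolding admissible_def by blast
  have P2: "\<forall>Om1 Om2 g1 g2. admissible Om1 Om2 g1 g2 \<longrightarrow> smooth_on Pcal (fmap b1 b2 Om1 Om2 g1 g2)"
    using fmap_smooth[OF bne] unfolding admissible_def by blast
  have P3: "\<forall>Om1 Om2 g1 g2 Om1' Om2' g1' g2'.
       admissible Om1 Om2 g1 g2 \<longrightarrow> admissible Om1' Om2' g1' g2' \<longrightarrow>
       ((\<forall>x\<in>Psig. Fvf b1 b2 Om1 Om2 g1 g2 x = Fvf b1 b2 Om1' Om2' g1' g2' x)
        \<longleftrightarrow> (\<forall>y\<in>Pcal. fmap b1 b2 Om1 Om2 g1 g2 y = fmap b1 b2 Om1' Om2' g1' g2' y))"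
    using part_ii_inj[OF bne] unfolding admissible_def by blast
  have P5: "\<forall>f. smooth_on Pcal f \<longrightarrow>
       (\<exists>Qf :: real \<times> real \<Rightarrow> real. \<exists>Pf :: real \<Rightarrow> real.
          smooth_on Pcal Qf \<and> smooth_on {0..} Pf \<and>
          (\<forall>X I. I \<ge> 0 \<longrightarrow> X \<noteq> 0 \<longrightarrow> Qf (X, I) = (f (X, I) - f (0, I)) / X) \<and>
          (\<forall>I. I \<ge> 0 \<longrightarrow> I \<noteq> 1 \<longrightarrow> Pf I = (f (0, I) - f (0, 1) * I) / (1 - I)) \<and>
          (\<exists>Om1 Om2 g1 g2. admissible Om1 Om2 g1 g2 \<and>
             (\<forall>X X' I. I \<ge> 0 \<longrightarrow> Pfun b1 b2 Om1 Om2 (X, I) = Pfun b1 b2 Om1 Om2 (X', I)) \<and>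
             (\<forall>y\<in>Pcal. pushforward (phi b1 b2) (phi_inv b1 b2) (Fvf b1 b2 Om1 Om2 g1 g2) y = Vf f y)) \<and>
          (\<forall>Om1 Om2 g1 g2.
             (admissible Om1 Om2 g1 g2 \<and>
              (\<forall>X X' I. I \<ge> 0 \<longrightarrow> Pfun b1 b2 Om1 Om2 (X, I) = Pfun b1 b2 Om1 Om2 (X', I)) \<and>
              (\<forall>y\<in>Pcal. pushforward (phi b1 b2) (phi_inv b1 b2) (Fvf b1 b2 Om1 Om2 g1 g2) y = Vf f y))
             \<longleftrightarrow>
             ((\<forall>S\<in>Psig. Om1 S = (\<lambda>y. (Pf (snd y) + b1 * Qf y + b1\<^sup>2 * snd y) / (b2 - b1)) (phi b1 b2 S)) \<and>
              (\<forall>S\<in>Psig. Om2 S = (\<lambda>y. (Pf (snd y) + b2 * Qf y + b2\<^sup>2 * snd y) / (b1 - b2)) (phi b1 b2 S)) \<and>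
              g1 = (f (0, 1) - b2) / (b1 - b2) \<and>
              g2 = (b1 - f (0, 1)) / (b1 - b2))))"
  proof (intro allI impI)
    fix f :: "real \<times> real \<Rightarrow> real"
    assume f: "smooth_on Pcal f"
    obtain Qf Pf where QP: "smooth_on Pcal Qf" "smooth_on {0..} Pf"
      "\<forall>X I. I \<ge> 0 \<longrightarrow> X \<noteq> 0 \<longrightarrow> Qf (X, I) = (f (X, I) - f (0, I)) / X"
      "\<forall>I. I \<ge> 0 \<longrightarrow> I \<noteq> 1 \<longrightarrow> Pf I = (f (0, I) - f (0, 1) * I) / (1 - I)"
      using QP_exist[OF f] by blast
    define O1 where "O1 = (\<lambda>S. (\<lambda>y. (Pf (snd y) + b1 * Qf y + b1\<^sup>2 * snd y) / (b2 - b1)) (phi b1 b2 S))"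
    define O2 where "O2 = (\<lambda>S. (\<lambda>y. (Pf (snd y) + b2 * Qf y + b2\<^sup>2 * snd y) / (b1 - b2)) (phi b1 b2 S))"
    define G1 where "G1 = (f (0, 1) - b2) / (b1 - b2)"
    define G2 where "G2 = (b1 - f (0, 1)) / (b1 - b2)"
    have ex: "admissible O1 O2 G1 G2 \<and>
             (\<forall>X X' I. I \<ge> 0 \<longrightarrow> Pfun b1 b2 O1 O2 (X, I) = Pfun b1 b2 O1 O2 (X', I)) \<and>
             (\<forall>y\<in>Pcal. pushforward (phi b1 b2) (phi_inv b1 b2) (Fvf b1 b2 O1 O2 G1 G2) y = Vf f y)"
      by (rule UNIQ_if[OF b QP]) (simp_all add: O1_def O2_def G1_def G2_def)
    have iff: "(admissible Om1 Om2 g1 g2 \<and>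
              (\<forall>X X' I. I \<ge> 0 \<longrightarrow> Pfun b1 b2 Om1 Om2 (X, I) = Pfun b1 b2 Om1 Om2 (X', I)) \<and>
              (\<forall>y\<in>Pcal. pushforward (phi b1 b2) (phi_inv b1 b2) (Fvf b1 b2 Om1 Om2 g1 g2) y = Vf f y))
             \<longleftrightarrow>
             ((\<forall>S\<in>Psig. Om1 S = (\<lambda>y. (Pf (snd y) + b1 * Qf y + b1\<^sup>2 * snd y) / (b2 - b1)) (phi b1 b2 S)) \<and>
              (\<forall>S\<in>Psig. Om2 S = (\<lambda>y. (Pf (snd y) + b2 * Qf y + b2\<^sup>2 * snd y) / (b1 - b2)) (phi b1 b2 S)) \<and>
              g1 = (f (0, 1) - b2) / (b1 - b2) \<and>
              g2 = (b1 - f (0, 1)) / (b1 - b2))" for Om1 Om2 g1 g2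
    proof
      assume H: "admissible Om1 Om2 g1 g2 \<and>
              (\<forall>X X' I. I \<ge> 0 \<longrightarrow> Pfun b1 b2 Om1 Om2 (X, I) = Pfun b1 b2 Om1 Om2 (X', I)) \<and>
              (\<forall>y\<in>Pcal. pushforward (phi b1 b2) (phi_inv b1 b2) (Fvf b1 b2 Om1 Om2 g1 g2) y = Vf f y)"
      show "(\<forall>S\<in>Psig. Om1 S = (\<lambda>y. (Pf (snd y) + b1 * Qf y + b1\<^sup>2 * snd y) / (b2 - b1)) (phi b1 b2 S)) \<and>
              (\<forall>S\<in>Psig. Om2 S = (\<lambda>y. (Pf (snd y) + b2 * Qf y + b2\<^sup>2 * snd y) / (b1 - b2)) (phi b1 b2 S)) \<and>
              g1 = (f (0, 1) - b2) / (b1 - b2) \<and>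
              g2 = (b1 - f (0, 1)) / (b1 - b2)"
        using H UNIQ_only_if[OF b QP, of Om1 Om2 g1 g2] by blast
    next
      assume H: "(\<forall>S\<in>Psig. Om1 S = (\<lambda>y. (Pf (snd y) + b1 * Qf y + b1\<^sup>2 * snd y) / (b2 - b1)) (phi b1 b2 S)) \<and>
              (\<forall>S\<in>Psig. Om2 S = (\<lambda>y. (Pf (snd y) + b2 * Qf y + b2\<^sup>2 * snd y) / (b1 - b2)) (phi b1 b2 S)) \<and>
              g1 = (f (0, 1) - b2) / (b1 - b2) \<and>
              g2 = (b1 - f (0, 1)) / (b1 - b2)"
      show "admissible Om1 Om2 g1 g2 \<and>
              (\<forall>X X' I. I \<ge> 0 \<longrightarrow> Pfun b1 b2 Om1 Om2 (X, I) = Pfun b1 b2 Om1 Om2 (X', I)) \<and>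
              (\<forall>y\<in>Pcal. pushforward (phi b1 b2) (phi_inv b1 b2) (Fvf b1 b2 Om1 Om2 g1 g2) y = Vf f y)"
        using H by (intro UNIQ_if[OF b QP]) blast+
    qed
    show "\<exists>Qf :: real \<times> real \<Rightarrow> real. \<exists>Pf :: real \<Rightarrow> real.
          smooth_on Pcal Qf \<and> smooth_on {0..} Pf \<and>
          (\<forall>X I. I \<ge> 0 \<longrightarrow> X \<noteq> 0 \<longrightarrow> Qf (X, I) = (f (X, I) - f (0, I)) / X) \<and>
          (\<forall>I. I \<ge> 0 \<longrightarrow> I \<noteq> 1 \<longrightarrow> Pf I = (f (0, I) - f (0, 1) * I) / (1 - I)) \<and>
          (\<exists>Om1 Om2 g1 g2. admissible Om1 Om2 g1 g2 \<and>
             (\<forall>X X' I. I \<ge> 0 \<longrightarrow> Pfun b1 b2 Om1 Om2 (X, I) = Pfun b1 b2 Om1 Om2 (X', I)) \<and>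
             (\<forall>y\<in>Pcal. pushforward (phi b1 b2) (phi_inv b1 b2) (Fvf b1 b2 Om1 Om2 g1 g2) y = Vf f y)) \<and>
          (\<forall>Om1 Om2 g1 g2.
             (admissible Om1 Om2 g1 g2 \<and>
              (\<forall>X X' I. I \<ge> 0 \<longrightarrow> Pfun b1 b2 Om1 Om2 (X, I) = Pfun b1 b2 Om1 Om2 (X', I)) \<and>
              (\<forall>y\<in>Pcal. pushforward (phi b1 b2) (phi_inv b1 b2) (Fvf b1 b2 Om1 Om2 g1 g2) y = Vf f y))
             \<longleftrightarrow>
             ((\<forall>S\<in>Psig. Om1 S = (\<lambda>y. (Pf (snd y) + b1 * Qf y + b1\<^sup>2 * snd y) / (b2 - b1)) (phi b1 b2 S)) \<and>
              (\<forall>S\<in>Psig. Om2 S = (\<lambda>y. (Pf (snd y) + b2 * Qf y + b2\<^sup>2 * snd y) / (b1 - b2)) (phi b1 b2 S)) \<and>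
              g1 = (f (0, 1) - b2) / (b1 - b2) \<and>
              g2 = (b1 - f (0, 1)) / (b1 - b2)))"
      apply (rule exI[of _ Qf], rule exI[of _ Pf])
      apply (intro conjI QP)
      subgoal using ex by blast
      subgoal using iff by blast
      done
  qed
  have P4: "\<forall>f. smooth_on Pcal f \<longrightarrow>
       (\<exists>Om1 Om2 g1 g2. admissible Om1 Om2 g1 g2 \<and>
          (\<forall>y\<in>Pcal. fmap b1 b2 Om1 Om2 g1 g2 y = f y))"
  proof (intro allI impI)
    fix f :: "real \<times> real \<Rightarrow> real"
    assume f: "smooth_on Pcal f"
    obtain Om1 Om2 g1 g2 where H: "admissible Om1 Om2 g1 g2"
      "\<forall>y\<in>Pcal. pushforward (phi b1 b2) (phi_inv b1 b2) (Fvf b1 b2 Om1 Om2 g1 g2) y = Vf f y"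
      using P5 f by blast
    have "\<forall>y\<in>Pcal. fmap b1 b2 Om1 Om2 g1 g2 y = f y"
    proof
      fix y assume y: "y \<in> Pcal"
      have "Vf (fmap b1 b2 Om1 Om2 g1 g2) y = Vf f y" using H P1 y by metis
      then show "fmap b1 b2 Om1 Om2 g1 g2 y = f y" by (simp add: Vf_def)
    qed
    then show "\<exists>Om1 Om2 g1 g2. admissible Om1 Om2 g1 g2 \<and> (\<forall>y\<in>Pcal. fmap b1 b2 Om1 Om2 g1 g2 y = f y)"
      using H(1) by blast
  qed
  show ?thesis using P1 P2 P3 P4 P5 by blast
qed

end
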